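(* Let $0\le a\le A<B$ and consider the regression model $y(t)=\theta^Tf(t)+\epsilon(t)$ on $\mathcal{T}=[A,B]$, $\theta\in\mathbb{R}^m$ unknown, where $y$ and $y^{(1)}$ are observed on $[A,B]$ and the zero-mean errors have the integrated Brownian motion covariance kernel $$K(t,s)=\int_a^t\int_a^s\min(t',s')dt'ds'=\frac{\max(t,s)(\min(t,s)^2-a^2)}{2}-\frac{a^2(\min(t,s)-a)}{2}-\frac{\min(t,s)^3-a^3}{6}.$$ Suppose $f$ is four times differentiable on $[A,B]$. Define $\zeta_0(dt)=z_A\delta_A(dt)+z_B\delta_B(dt)+z(t)dt$ and $\zeta_1(dt)=z_{1,A}\delta_A(dt)+z_{1,B}\delta_B(dt)$, where $z(t)=f^{(4)}(t)$, $z_A=f^{(3)}(A)-\frac{6(A+a)}{(A+3a)(A-a)^2}f^{(1)}(A)+\frac{12A}{(A+3a)(A-a)^3}f(A)$, $z_{1,A}=-f^{(2)}(A)+\frac{4(A+2a)}{(A+3a)(A-a)}f^{(1)}(A)-\frac{6(A+a)}{(A+3a)(A-a)^2}f(A)$, $z_B=-f^{(3)}(B)$, $z_{1,B}=f^{(2)}(B)$. Assume $C=\int_A^Bf(t)\zeta_0^T(dt)+\int_{\mathcal{T}}f^{(1)}(t)\zeta_1^T(dt)$ is non-degenerate. Then $\hat\theta_{G_0,G_1}=\int_{\mathcal{T}}y(t)G_0(dt)+\int_{\mathcal{T}}y^{(1)}(t)G_1(dt)$ with $G_i=C^{-1}\zeta_i$ is a BLUE with covariance matrix $C^{-1}$.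
   Context: $\delta_A,\delta_B$ are Dirac measures. A BLUE is an unbiased estimator of the form $\int_{\mathcal{T}}y(t)H_0(dt)+\int_{\mathcal{T}}y^{(1)}(t)H_1(dt)$ ($H_i$ signed $\mathbb{R}^m$-valued measures) with minimal covariance matrix in Loewner order among such unbiased estimators. *)

theory Defs
  imports "HOL-Analysis.Analysis" "HOL-Probability.Giry_Monad"
begin

text \<open>An R^m-valued signed measure on T = [A,B] is represented as a finite list of
  components (mu, h), meaning H(dt) = sum of h(t) mu(dt), where mu is a (positive) Borel
  measure and h is an R^m-valued density that is mu-integrable on [A,B].  Every finite
  R^m-valued signed measure is of this form (polar decomposition), and finite sums of
  such objects (e.g. Dirac parts plus absolutely continuous parts) are again of this form.\<close>

type_synonym 'm vmeas = "(real measure \<times> (real \<Rightarrow> real^'m)) list"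

definition vmeas_ok :: "real \<Rightarrow> real \<Rightarrow> ('m::finite) vmeas \<Rightarrow> bool" where
  "vmeas_ok A B H \<longleftrightarrow>
     (\<forall>(\<mu>, h) \<in> set H. sets \<mu> = sets borel \<and> set_integrable \<mu> {A..B} h)"

definition vint :: "real \<Rightarrow> real \<Rightarrow> ('m::finite) vmeas \<Rightarrow> (real \<Rightarrow> real) \<Rightarrow> real^'m" where
  "vint A B H g = sum_list (map (\<lambda>(\<mu>, h). set_lebesgue_integral \<mu> {A..B} (\<lambda>t. g t *\<^sub>R h t)) H)"

definition vouter :: "real \<Rightarrow> real \<Rightarrow> (real \<Rightarrow> real^'m) \<Rightarrow> ('m::finite) vmeas \<Rightarrow> real^'m^'m" where
  "vouter A B f H = (\<chi> i. vint A B H (\<lambda>t. f t $ i))"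

definition mat_vmeas :: "real^'m^'m \<Rightarrow> ('m::finite) vmeas \<Rightarrow> 'm vmeas" where
  "mat_vmeas M H = map (\<lambda>(\<mu>, h). (\<mu>, \<lambda>t. M *v h t)) H"

definition K_ibm :: "real \<Rightarrow> real \<Rightarrow> real \<Rightarrow> real" where
  "K_ibm a t s = max t s * ((min t s)\<^sup>2 - a\<^sup>2) / 2 - a\<^sup>2 * (min t s - a) / 2
                 - ((min t s)^3 - a^3) / 6"

text \<open>Cov(eps(t), eps'(s)), Cov(eps'(t), eps(s)), Cov(eps'(t), eps'(s)) as derivatives of K\<close>
definition K_01 :: "real \<Rightarrow> real \<Rightarrow> real \<Rightarrow> real" where
  "K_01 a t s = deriv (\<lambda>v. K_ibm a t v) s"
definition K_10 :: "real \<Rightarrow> real \<Rightarrow> real \<Rightarrow> real" where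
  "K_10 a t s = deriv (\<lambda>u. K_ibm a u s) t"
definition K_11 :: "real \<Rightarrow> real \<Rightarrow> real \<Rightarrow> real" where
  "K_11 a t s = deriv (\<lambda>u. K_01 a u s) t"

text \<open>Cov(int p(t) H(dt), int q(s) G(ds)) as an m x m matrix, for a scalar kernel k = Cov(p(t),q(s))\<close>
definition ccov :: "real \<Rightarrow> real \<Rightarrow> (real \<Rightarrow> real \<Rightarrow> real) \<Rightarrow> ('m::finite) vmeas \<Rightarrow> 'm vmeas \<Rightarrow> real^'m^'m" where
  "ccov A B k H G = (\<chi> i j. sum_list (map (\<lambda>(\<mu>, h). sum_list (map (\<lambda>(\<nu>, g).
       set_lebesgue_integral \<mu> {A..B} (\<lambda>t. h t $ i *
          set_lebesgue_integral \<nu> {A..B} (\<lambda>s. k t s * g s $ j))) G)) H))"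

definition est_cov :: "real \<Rightarrow> real \<Rightarrow> real \<Rightarrow> ('m::finite) vmeas \<Rightarrow> 'm vmeas \<Rightarrow> real^'m^'m" where
  "est_cov a A B H0 H1 = ccov A B (K_ibm a) H0 H0 + ccov A B (K_01 a) H0 H1
                       + ccov A B (K_10 a) H1 H0 + ccov A B (K_11 a) H1 H1"

text \<open>Unbiasedness: E(theta_hat) = theta for all theta, where E y(t) = theta^T f(t), E y'(t) = theta^T f'(t)\<close>
definition unbiased :: "real \<Rightarrow> real \<Rightarrow> (real \<Rightarrow> real^'m) \<Rightarrow> (real \<Rightarrow> real^'m) \<Rightarrow> ('m::finite) vmeas \<Rightarrow> 'm vmeas \<Rightarrow> bool" where
  "unbiased A B f f1 H0 H1 \<longleftrightarrow>
     (\<forall>\<theta>::real^'m. vint A B H0 (\<lambda>t. \<theta> \<bullet> f t) + vint A B H1 (\<lambda>t. \<theta> \<bullet> f1 t) = \<theta>)"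

definition loewner_le :: "real^'m^'m \<Rightarrow> real^'m^'m \<Rightarrow> bool" where
  "loewner_le M N \<longleftrightarrow> (\<forall>v. v \<bullet> (M *v v) \<le> v \<bullet> (N *v v))"

definition is_BLUE :: "real \<Rightarrow> real \<Rightarrow> real \<Rightarrow> (real \<Rightarrow> real^'m) \<Rightarrow> (real \<Rightarrow> real^'m)
    \<Rightarrow> ('m::finite) vmeas \<Rightarrow> 'm vmeas \<Rightarrow> bool" where
  "is_BLUE a A B f f1 H0 H1 \<longleftrightarrow>
     vmeas_ok A B H0 \<and> vmeas_ok A B H1 \<and> unbiased A B f f1 H0 H1 \<and>
     (\<forall>G0 G1. vmeas_ok A B G0 \<and> vmeas_ok A B G1 \<and> unbiased A B f f1 G0 G1 \<longrightarrow>
        loewner_le (est_cov a A B H0 H1) (est_cov a A B G0 G1))"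

text \<open>The measures zeta_0, zeta_1; fd k is the k-th derivative of f\<close>
definition zeta0 :: "real \<Rightarrow> real \<Rightarrow> real \<Rightarrow> (nat \<Rightarrow> real \<Rightarrow> real^'m) \<Rightarrow> ('m::finite) vmeas" where
  "zeta0 a A B fd =
    [(return borel A, \<lambda>_. fd 3 A - (6 * (A + a) / ((A + 3 * a) * (A - a)\<^sup>2)) *\<^sub>R fd 1 A
                           + (12 * A / ((A + 3 * a) * (A - a)^3)) *\<^sub>R fd 0 A),
     (return borel B, \<lambda>_. - fd 3 B),
     (lborel, fd 4)]"

definition zeta1 :: "real \<Rightarrow> real \<Rightarrow> real \<Rightarrow> (nat \<Rightarrow> real \<Rightarrow> real^'m) \<Rightarrow> ('m::finite) vmeas" where
  "zeta1 a A B fd =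
    [(return borel A, \<lambda>_. - fd 2 A + (4 * (A + 2 * a) / ((A + 3 * a) * (A - a))) *\<^sub>R fd 1 A
                           - (6 * (A + a) / ((A + 3 * a) * (A - a)\<^sup>2)) *\<^sub>R fd 0 A),
     (return borel B, \<lambda>_. fd 2 B)]"

end

theory Submission
  imports Defs
begin


lemma fubini_swap:
  fixes \<rho> :: "real measure" and \<sigma> G :: "real \<Rightarrow> real" and \<psi> :: "real \<Rightarrow> real \<Rightarrow> real"
  assumes fin: "finite_measure \<rho>" and sets: "sets \<rho> = sets borel"
    and \<sigma>m: "\<sigma> \<in> borel_measurable borel" and \<sigma>b: "\<And>t. \<bar>\<sigma> t\<bar> \<le> 1"
    and \<psi>m: "(\<lambda>(t,u). \<psi> t u) \<in> borel_measurable (borel \<Otimes>\<^sub>M borel)" and \<psi>b: "\<And>t u. \<bar>\<psi> t u\<bar> \<le> M"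
    and Gm: "G \<in> borel_measurable borel" and Gb: "\<And>u. \<bar>G u\<bar> \<le> N"
  shows "(LINT t|\<rho>. \<sigma> t * (LINT u|lborel. indicator {0..B} u * (\<psi> t u * G u)))
       = (LINT u|lborel. indicator {0..B} u * (G u * (LINT t|\<rho>. \<sigma> t * \<psi> t u)))"
proof -
  interpret \<rho>: finite_measure \<rho> by (rule fin)
  interpret P: pair_sigma_finite \<rho> lborel
    by (simp add: pair_sigma_finite_def \<rho>.sigma_finite_measure_axioms lborel.sigma_finite_measure_axioms)
  define f where "f t u = \<sigma> t * indicator {0..B} u * \<psi> t u * G u" for t u
  have sp: "space \<rho> = UNIV" using sets_eq_imp_space_eq[OF sets] by simp
  have sP: "sets (\<rho> \<Otimes>\<^sub>M lborel) = sets (borel \<Otimes>\<^sub>M borel)"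
    by (rule sets_pair_measure_cong[OF sets]) simp
  have fm: "(\<lambda>(t,u). f t u) \<in> borel_measurable (\<rho> \<Otimes>\<^sub>M lborel)"
    unfolding measurable_cong_sets[OF sP refl] f_def
    using \<psi>m \<sigma>m Gm by measurable
  have M0: "0 \<le> M" using \<psi>b[of 0 0] by linarith
  have N0: "0 \<le> N" using Gb[of 0] by linarith
  have "integrable (\<rho> \<Otimes>\<^sub>M lborel) (\<lambda>(t,u). f t u)"
  proof (rule Bochner_Integration.integrable_bound[where f="\<lambda>x. (M * N) * indicator (UNIV \<times> {0..B}) x"])
    show "integrable (\<rho> \<Otimes>\<^sub>M lborel) (\<lambda>x. (M * N) * indicator (UNIV \<times> {0..B}) x)"
    proof (intro integrable_mult_right integrable_real_indicator)
      show "UNIV \<times> {0..B} \<in> sets (\<rho> \<Otimes>\<^sub>M lborel)" using sP sp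
        by (metis borel_closed closed_atLeastAtMost pair_measureI sets.top sets_lborel space_borel)
      have "emeasure (\<rho> \<Otimes>\<^sub>M lborel) (UNIV \<times> {0..B}) = emeasure \<rho> UNIV * emeasure lborel {0..B}"
        by (metis lborel.emeasure_pair_measure_Times sets.top sets_lborel sp atLeastAtMost_borel)
      also have "\<dots> < \<infinity>"
      proof -
        have "emeasure \<rho> UNIV < \<infinity>" proof -
          have "emeasure \<rho> (space \<rho>) \<noteq> \<infinity>" using \<rho>.emeasure_finite by auto
          then show ?thesis using sp by (metis less_top infinity_ennreal_def)
        qed
        moreover have "emeasure lborel {0..B} < \<infinity>" by (simp add: emeasure_lborel_Icc_eq)
        ultimately show ?thesis by (simp add: ennreal_mult_less_top)
      qed
      finally show "emeasure (\<rho> \<Otimes>\<^sub>M lborel) (UNIV \<times> {0..B}) < \<infinity>" .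
    qed
    show "(\<lambda>(t,u). f t u) \<in> borel_measurable (\<rho> \<Otimes>\<^sub>M lborel)" by (rule fm)
    show "AE x in \<rho> \<Otimes>\<^sub>M lborel. norm ((\<lambda>(t,u). f t u) x) \<le> norm (M * N * indicator (UNIV \<times> {0..B}) x)"
    proof (intro AE_I2)
      fix x :: "real \<times> real"
      obtain t u where x: "x = (t,u)" by (cases x)
      have "\<bar>\<sigma> t * \<psi> t u * G u\<bar> \<le> 1 * M * N"
        unfolding abs_mult by (intro mult_mono) (use \<sigma>b \<psi>b Gb M0 in auto)
      then show "norm ((\<lambda>(t,u). f t u) x) \<le> norm (M * N * indicator (UNIV \<times> {0..B}) x)"
        using M0 N0 by (auto simp: x f_def indicator_def)
    qed
  qed
  from P.Fubini_integral[OF this]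
  have "(LINT u|lborel. LINT t|\<rho>. f t u) = (LINT t|\<rho>. LINT u|lborel. f t u)" .
  moreover have "\<And>t. (LINT u|lborel. f t u) = \<sigma> t * (LINT u|lborel. indicator {0..B} u * (\<psi> t u * G u))"
  proof -
    fix t
    have "(LINT u|lborel. f t u) = (LINT u|lborel. \<sigma> t * (indicator {0..B} u * (\<psi> t u * G u)))"
      by (simp add: f_def mult_ac)
    also have "\<dots> = \<sigma> t * (LINT u|lborel. indicator {0..B} u * (\<psi> t u * G u))"
      by (rule integral_mult_right_zero)
    finally show "(LINT u|lborel. f t u) = \<sigma> t * (LINT u|lborel. indicator {0..B} u * (\<psi> t u * G u))" .
  qed
  moreover have "\<And>u. (LINT t|\<rho>. f t u) = indicator {0..B} u * (G u * (LINT t|\<rho>. \<sigma> t * \<psi> t u))"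
  proof -
    fix u
    have "(LINT t|\<rho>. f t u) = (LINT t|\<rho>. (indicator {0..B} u * G u) * (\<sigma> t * \<psi> t u))"
      by (simp add: f_def mult_ac)
    also have "\<dots> = (indicator {0..B} u * G u) * (LINT t|\<rho>. \<sigma> t * \<psi> t u)"
      by (rule integral_mult_right_zero)
    finally show "(LINT t|\<rho>. f t u) = indicator {0..B} u * (G u * (LINT t|\<rho>. \<sigma> t * \<psi> t u))"
      by (simp add: mult_ac)
  qed
  ultimately show ?thesis by simp
qed


definition dens :: "real \<Rightarrow> real \<Rightarrow> real measure \<Rightarrow> (real \<Rightarrow> real) \<Rightarrow> real measure" where
  "dens A B \<mu> h = density \<mu> (\<lambda>t. ennreal \<bar>indicator {A..B} t * h t\<bar>)"
definition sg :: "real \<Rightarrow> real \<Rightarrow> (real \<Rightarrow> real) \<Rightarrow> real \<Rightarrow> real" where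
  "sg A B h t = sgn (indicator {A..B} t * h t)"

lemma dens_props:
  fixes h :: "real \<Rightarrow> real"
  assumes sets: "sets \<mu> = sets borel" and int: "set_integrable \<mu> {A..B} h"
  shows "finite_measure (dens A B \<mu> h)" "sets (dens A B \<mu> h) = sets borel"
    "sg A B h \<in> borel_measurable borel" "\<And>t. \<bar>sg A B h t\<bar> \<le> 1"
proof -
  have hm: "(\<lambda>t. indicator {A..B} t * h t) \<in> borel_measurable borel"
    using int unfolding set_integrable_def
    by (simp add: measurable_cong_sets[OF sets refl, symmetric] borel_measurable_integrable)
  show "sets (dens A B \<mu> h) = sets borel" by (simp add: dens_def sets)
  show "sg A B h \<in> borel_measurable borel" unfolding sg_def[abs_def] using hm by measurable
  show "\<And>t. \<bar>sg A B h t\<bar> \<le> 1" by (simp add: sg_def abs_sgn_eq)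
  have "integrable \<mu> (\<lambda>t. indicator {A..B} t * h t)" using int unfolding set_integrable_def by simp
  then have "(\<integral>\<^sup>+ t. ennreal (norm (indicator {A..B} t * h t)) \<partial>\<mu>) < \<infinity>"
    by (simp add: integrable_iff_bounded)
  then have "emeasure (dens A B \<mu> h) (space (dens A B \<mu> h)) \<noteq> \<infinity>"
    unfolding dens_def using hm
    by (subst emeasure_density) (auto simp: measurable_cong_sets[OF sets refl] less_top)
  then show "finite_measure (dens A B \<mu> h)" by (rule finite_measureI)
qed

lemma dens_eq:
  fixes h F :: "real \<Rightarrow> real"
  assumes sets: "sets \<mu> = sets borel" and int: "set_integrable \<mu> {A..B} h"
    and Fm: "F \<in> borel_measurable borel"
  shows "set_lebesgue_integral \<mu> {A..B} (\<lambda>t. F t * h t) = (LINT t|dens A B \<mu> h. sg A B h t * F t)"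
proof -
  have hm: "(\<lambda>t. indicator {A..B} t * h t) \<in> borel_measurable \<mu>"
    using int unfolding set_integrable_def
    by (simp add: borel_measurable_integrable)
  have "(LINT t|dens A B \<mu> h. sg A B h t * F t) = (LINT t|\<mu>. \<bar>indicator {A..B} t * h t\<bar> * (sg A B h t * F t))"
    unfolding dens_def
  proof (rule integral_real_density)
    show "(\<lambda>t. \<bar>indicator {A..B} t * h t\<bar>) \<in> borel_measurable \<mu>" using hm by measurable
    show "AE x in \<mu>. 0 \<le> \<bar>indicator {A..B} x * h x\<bar>" by simp
    show "(\<lambda>t. sg A B h t * F t) \<in> borel_measurable \<mu>"
    proof -
      have Fmu: "F \<in> borel_measurable \<mu>" using Fm by (simp add: measurable_cong_sets[OF sets refl])
      show ?thesis unfolding sg_def using hm Fmu by measurable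
    qed
  qed
  also have "\<dots> = set_lebesgue_integral \<mu> {A..B} (\<lambda>t. F t * h t)"
    unfolding set_lebesgue_integral_def sg_def
    by (intro Bochner_Integration.integral_cong refl) (auto simp: indicator_def abs_mult_sgn mult_ac)
  finally show ?thesis by simp
qed


lemma psi_slice:
  assumes "(\<lambda>(t,u). \<psi> t u) \<in> borel_measurable (borel \<Otimes>\<^sub>M borel)"
  shows "(\<lambda>t. \<psi> t u) \<in> borel_measurable borel" "(\<lambda>u. \<psi> t u) \<in> borel_measurable borel"
  using measurable_compose[OF measurable_Pair2'[of u borel borel] assms]
    measurable_compose[OF measurable_Pair1'[of t borel borel] assms] by auto

lemma prod_meas_helper:
  assumes \<psi>m: "(\<lambda>(t,u). \<psi> t u) \<in> borel_measurable (borel \<Otimes>\<^sub>M borel)"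
    and Gm: "(G::real\<Rightarrow>real) \<in> borel_measurable borel"
  shows "(\<lambda>x. indicator {0..B} (snd x) * (\<psi> (fst x) (snd x) * G (snd x))) \<in> borel_measurable (borel \<Otimes>\<^sub>M borel)"
proof -
  have 1: "(\<lambda>x. \<psi> (fst x) (snd x)) \<in> borel_measurable (borel \<Otimes>\<^sub>M borel)"
    using \<psi>m by (simp add: case_prod_beta')
  have 2: "(\<lambda>x. G (snd x)) \<in> borel_measurable (borel \<Otimes>\<^sub>M (borel::real measure))"
    by (rule measurable_compose[OF measurable_snd Gm])
  have 3: "(\<lambda>x. indicator {0..B} (snd x) :: real) \<in> borel_measurable (borel \<Otimes>\<^sub>M (borel::real measure))"
    by (rule measurable_compose[OF measurable_snd]) simp
  show ?thesis using 1 2 3 by (intro borel_measurable_times)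
qed


lemma psi_swap_meas:
  fixes \<psi> :: "real \<Rightarrow> real \<Rightarrow> real"
  assumes \<psi>m: "(\<lambda>(t,u). \<psi> t u) \<in> borel_measurable (borel \<Otimes>\<^sub>M borel)"
  shows "(\<lambda>x. \<psi> (snd x) (fst x)) \<in> borel_measurable (borel \<Otimes>\<^sub>M (borel::real measure))"
proof -
  have "(\<lambda>x. (snd x, fst x)) \<in> (borel::real measure) \<Otimes>\<^sub>M (borel::real measure) \<rightarrow>\<^sub>M borel \<Otimes>\<^sub>M borel"
    by (intro measurable_Pair measurable_snd measurable_fst)
  from measurable_compose[OF this \<psi>m] show ?thesis by simp
qed

lemma param_meas:
  assumes "(\<lambda>(t,u). \<psi> t u) \<in> borel_measurable (borel \<Otimes>\<^sub>M borel)"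
    and "(G::real\<Rightarrow>real) \<in> borel_measurable borel"
  shows "(\<lambda>t. set_lebesgue_integral lborel {0..B} (\<lambda>u. \<psi> t u * G u)) \<in> borel_measurable borel"
proof -
  have s: "sets (borel \<Otimes>\<^sub>M lborel) = sets (borel \<Otimes>\<^sub>M (borel::real measure))"
    by (rule sets_pair_measure_cong) auto
  have "(\<lambda>(t,u). indicator {0..B} u *\<^sub>R (\<psi> t u * G u)) \<in> borel_measurable (borel \<Otimes>\<^sub>M lborel)"
    unfolding measurable_cong_sets[OF s refl] using prod_meas_helper[OF assms, of B]
    by (simp add: case_prod_beta')
  then show ?thesis unfolding set_lebesgue_integral_def
    by (rule lborel.borel_measurable_lebesgue_integral)
qed

lemma s_swap:
  fixes h G :: "real \<Rightarrow> real" and \<psi> :: "real \<Rightarrow> real \<Rightarrow> real"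
  assumes sets: "sets \<mu> = sets borel" and int: "set_integrable \<mu> {A..B} h"
    and \<psi>m: "(\<lambda>(t,u). \<psi> t u) \<in> borel_measurable (borel \<Otimes>\<^sub>M borel)" and \<psi>b: "\<And>t u. \<bar>\<psi> t u\<bar> \<le> M"
    and Gm: "G \<in> borel_measurable borel" and Gb: "\<And>u. \<bar>G u\<bar> \<le> N"
  shows "set_lebesgue_integral \<mu> {A..B} (\<lambda>t. h t * set_lebesgue_integral lborel {0..C} (\<lambda>u. \<psi> t u * G u))
       = set_lebesgue_integral lborel {0..C} (\<lambda>u. G u * set_lebesgue_integral \<mu> {A..B} (\<lambda>t. \<psi> t u * h t))"
proof -
  note dp = dens_props[OF sets int]
  have "set_lebesgue_integral \<mu> {A..B} (\<lambda>t. h t * set_lebesgue_integral lborel {0..C} (\<lambda>u. \<psi> t u * G u))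
     = set_lebesgue_integral \<mu> {A..B} (\<lambda>t. set_lebesgue_integral lborel {0..C} (\<lambda>u. \<psi> t u * G u) * h t)"
    by (simp add: mult.commute)
  also have "\<dots> = (LINT t|dens A B \<mu> h. sg A B h t * set_lebesgue_integral lborel {0..C} (\<lambda>u. \<psi> t u * G u))"
    by (rule dens_eq[OF sets int param_meas[OF \<psi>m Gm]])
  also have "\<dots> = (LINT u|lborel. indicator {0..C} u * (G u * (LINT t|dens A B \<mu> h. sg A B h t * \<psi> t u)))"
    unfolding set_lebesgue_integral_def real_scaleR_def
    by (rule fubini_swap[OF dp(1,2,3,4) \<psi>m \<psi>b Gm Gb])
  also have "\<dots> = set_lebesgue_integral lborel {0..C} (\<lambda>u. G u * set_lebesgue_integral \<mu> {A..B} (\<lambda>t. \<psi> t u * h t))"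
    unfolding set_lebesgue_integral_def[of lborel] real_scaleR_def
    using dens_eq[OF sets int psi_slice(1)[OF \<psi>m]] by simp
  finally show ?thesis .
qed

lemma s_meas:
  fixes h :: "real \<Rightarrow> real" and \<psi> :: "real \<Rightarrow> real \<Rightarrow> real"
  assumes sets: "sets \<mu> = sets borel" and int: "set_integrable \<mu> {A..B} h"
    and \<psi>m: "(\<lambda>(t,u). \<psi> t u) \<in> borel_measurable (borel \<Otimes>\<^sub>M borel)" and \<psi>b: "\<And>t u. \<bar>\<psi> t u\<bar> \<le> M"
  shows "(\<lambda>u. set_lebesgue_integral \<mu> {A..B} (\<lambda>t. \<psi> t u * h t)) \<in> borel_measurable borel"
    "\<exists>N. \<forall>u. \<bar>set_lebesgue_integral \<mu> {A..B} (\<lambda>t. \<psi> t u * h t)\<bar> \<le> N"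
proof -
  note dp = dens_props[OF sets int]
  interpret \<rho>: finite_measure "dens A B \<mu> h" by (rule dp(1))
  have eq: "\<And>u. set_lebesgue_integral \<mu> {A..B} (\<lambda>t. \<psi> t u * h t) = (LINT t|dens A B \<mu> h. sg A B h t * \<psi> t u)"
    using dens_eq[OF sets int psi_slice(1)[OF \<psi>m]] by simp
  have s: "sets (borel \<Otimes>\<^sub>M dens A B \<mu> h) = sets (borel \<Otimes>\<^sub>M (borel::real measure))"
    by (rule sets_pair_measure_cong) (auto simp: dp(2))
  have "(\<lambda>(u,t). sg A B h t * \<psi> t u) \<in> borel_measurable (borel \<Otimes>\<^sub>M dens A B \<mu> h)"
  proof -
    have "(\<lambda>x. sg A B h (snd x)) \<in> borel_measurable (borel \<Otimes>\<^sub>M (borel::real measure))"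
      by (rule measurable_compose[OF measurable_snd dp(3)])
    then have "(\<lambda>x. sg A B h (snd x) * \<psi> (snd x) (fst x)) \<in> borel_measurable (borel \<Otimes>\<^sub>M (borel::real measure))"
      using psi_swap_meas[OF \<psi>m] by (intro borel_measurable_times)
    then show ?thesis unfolding measurable_cong_sets[OF s refl] by (simp add: case_prod_beta')
  qed
  then show "(\<lambda>u. set_lebesgue_integral \<mu> {A..B} (\<lambda>t. \<psi> t u * h t)) \<in> borel_measurable borel"
    unfolding eq by (rule sigma_finite_measure.borel_measurable_lebesgue_integral[OF \<rho>.sigma_finite_measure_axioms])
  show "\<exists>N. \<forall>u. \<bar>set_lebesgue_integral \<mu> {A..B} (\<lambda>t. \<psi> t u * h t)\<bar> \<le> N"
  proof (intro exI allI)
    fix u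
    have bnd: "\<And>t. \<bar>sg A B h t * \<psi> t u\<bar> \<le> M"
    proof -
      fix t
      have "\<bar>sg A B h t\<bar> * \<bar>\<psi> t u\<bar> \<le> 1 * M"
        using dp(4)[of t] \<psi>b[of t u] by (intro mult_mono) auto
      then show "\<bar>sg A B h t * \<psi> t u\<bar> \<le> M" by (simp add: abs_mult)
    qed
    have m: "(\<lambda>t. sg A B h t * \<psi> t u) \<in> borel_measurable (dens A B \<mu> h)"
      unfolding measurable_cong_sets[OF dp(2) refl] using dp(3) psi_slice(1)[OF \<psi>m]
      by (intro borel_measurable_times)
    have i1: "integrable (dens A B \<mu> h) (\<lambda>t. sg A B h t * \<psi> t u)"
      using m bnd by (intro \<rho>.integrable_const_bound[where B=M]) auto
    have "norm (LINT t|dens A B \<mu> h. sg A B h t * \<psi> t u) \<le> (LINT t|dens A B \<mu> h. M)"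
    proof (rule Bochner_Integration.integral_norm_bound_integral[OF i1])
      show "integrable (dens A B \<mu> h) (\<lambda>t. M)"
        by (rule \<rho>.integrable_const_bound[where B="\<bar>M\<bar>"]) auto
    qed (use bnd in auto)
    then have "\<bar>LINT t|dens A B \<mu> h. sg A B h t * \<psi> t u\<bar> \<le> M * measure (dens A B \<mu> h) (space (dens A B \<mu> h))"
      by (simp add: mult.commute)
    then show "\<bar>set_lebesgue_integral \<mu> {A..B} (\<lambda>t. \<psi> t u * h t)\<bar> \<le> M * measure (dens A B \<mu> h) (space (dens A B \<mu> h))"
      unfolding eq .
  qed
qed


lemma deriv_glue:
  fixes P Q P' Q' :: "real \<Rightarrow> real"
  assumes dP: "\<And>x. (P has_real_derivative P' x) (at x)" and dQ: "\<And>x. (Q has_real_derivative Q' x) (at x)"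
    and c1: "P c = Q c" and c2: "P' c = Q' c"
  shows "((\<lambda>x. if x \<le> c then P x else Q x) has_real_derivative (if x \<le> c then P' x else Q' x)) (at x)"
proof -
  have cl: "closure {..c} \<inter> closure {c<..} = {c}" by auto
  have "((\<lambda>x. if x \<in> {..c} then P x else Q x) has_vector_derivative (if x \<in> {..c} then P' x else Q' x))
      (at x within UNIV)"
  proof (rule has_vector_derivative_If_within_closures[where S="{..c}" and T="{c<..}"])
    show "x \<in> {..c} \<union> {c<..}" by auto
    show "UNIV = {..c} \<union> {c<..}" by auto
    show "(P has_vector_derivative P' x) (at x within {..c} \<union> closure {..c} \<inter> closure {c<..})"
      using dP[of x] by (simp add: has_real_derivative_iff_has_vector_derivative[symmetric] has_field_derivative_at_within)
    show "(Q has_vector_derivative Q' x) (at x within {c<..} \<union> closure {..c} \<inter> closure {c<..})"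
      using dQ[of x] by (simp add: has_real_derivative_iff_has_vector_derivative[symmetric] has_field_derivative_at_within)
    show "x \<in> closure {..c} \<Longrightarrow> x \<in> closure {c<..} \<Longrightarrow> P x = Q x" using c1 by auto
    show "x \<in> closure {..c} \<Longrightarrow> x \<in> closure {c<..} \<Longrightarrow> P' x = Q' x" using c2 by auto
  qed
  then show ?thesis by (simp add: has_real_derivative_iff_has_vector_derivative)
qed

definition k01 :: "real \<Rightarrow> real \<Rightarrow> real \<Rightarrow> real" where
  "k01 a t s = (if s \<le> t then t * s - s\<^sup>2 / 2 - a\<^sup>2 / 2 else (t\<^sup>2 - a\<^sup>2) / 2)"

lemma K_ibm_if_s: "K_ibm a t = (\<lambda>v. if v \<le> t then t * (v\<^sup>2 - a\<^sup>2) / 2 - a\<^sup>2 * (v - a) / 2 - (v ^ 3 - a ^ 3) / 6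
                               else v * (t\<^sup>2 - a\<^sup>2) / 2 - a\<^sup>2 * (t - a) / 2 - (t ^ 3 - a ^ 3) / 6)"
  by (auto simp: K_ibm_def fun_eq_iff max_def min_def)

lemma K_ibm_if_t: "(\<lambda>u. K_ibm a u s) = (\<lambda>u. if u \<le> s then s * (u\<^sup>2 - a\<^sup>2) / 2 - a\<^sup>2 * (u - a) / 2 - (u ^ 3 - a ^ 3) / 6
                               else u * (s\<^sup>2 - a\<^sup>2) / 2 - a\<^sup>2 * (s - a) / 2 - (s ^ 3 - a ^ 3) / 6)"
  by (auto simp: K_ibm_def fun_eq_iff max_def min_def)

lemma K_01_closed: "K_01 a t s = k01 a t s"
proof -
  have "((\<lambda>v. if v \<le> t then t * (v\<^sup>2 - a\<^sup>2) / 2 - a\<^sup>2 * (v - a) / 2 - (v ^ 3 - a ^ 3) / 6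
                               else v * (t\<^sup>2 - a\<^sup>2) / 2 - a\<^sup>2 * (t - a) / 2 - (t ^ 3 - a ^ 3) / 6)
     has_real_derivative (if s \<le> t then t * s - s\<^sup>2 / 2 - a\<^sup>2 / 2 else (t\<^sup>2 - a\<^sup>2) / 2)) (at s)"
    apply (rule deriv_glue)
    subgoal by (auto intro!: derivative_eq_intros simp: power2_eq_square power3_eq_cube algebra_simps divide_simps)
    subgoal by (auto intro!: derivative_eq_intros simp: power2_eq_square power3_eq_cube algebra_simps divide_simps)
    subgoal by (simp add: power2_eq_square power3_eq_cube algebra_simps divide_simps)
    subgoal by (simp add: power2_eq_square power3_eq_cube algebra_simps divide_simps)
    done
  then show ?thesis unfolding K_01_def K_ibm_if_s k01_def by (rule DERIV_imp_deriv)
qed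

lemma K_10_closed: "K_10 a t s = k01 a s t"
proof -
  have "((\<lambda>u. if u \<le> s then s * (u\<^sup>2 - a\<^sup>2) / 2 - a\<^sup>2 * (u - a) / 2 - (u ^ 3 - a ^ 3) / 6
                               else u * (s\<^sup>2 - a\<^sup>2) / 2 - a\<^sup>2 * (s - a) / 2 - (s ^ 3 - a ^ 3) / 6)
     has_real_derivative (if t \<le> s then s * t - t\<^sup>2 / 2 - a\<^sup>2 / 2 else (s\<^sup>2 - a\<^sup>2) / 2)) (at t)"
    apply (rule deriv_glue)
    subgoal by (auto intro!: derivative_eq_intros simp: power2_eq_square power3_eq_cube algebra_simps divide_simps)
    subgoal by (auto intro!: derivative_eq_intros simp: power2_eq_square power3_eq_cube algebra_simps divide_simps)
    subgoal by (simp add: power2_eq_square power3_eq_cube algebra_simps divide_simps)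
    subgoal by (simp add: power2_eq_square power3_eq_cube algebra_simps divide_simps)
    done
  then have "deriv (\<lambda>u. K_ibm a u s) t = (if t \<le> s then s * t - t\<^sup>2 / 2 - a\<^sup>2 / 2 else (s\<^sup>2 - a\<^sup>2) / 2)"
    unfolding K_ibm_if_t by (rule DERIV_imp_deriv)
  then show ?thesis unfolding K_10_def k01_def by (auto simp: mult.commute power2_eq_square)
qed

lemma K_11_closed: "K_11 a t s = min t s"
proof -
  have e: "(\<lambda>u. K_01 a u s) = (\<lambda>u. if u \<le> s then (u\<^sup>2 - a\<^sup>2) / 2 else u * s - s\<^sup>2 / 2 - a\<^sup>2 / 2)"
    by (auto simp: fun_eq_iff K_01_closed k01_def power2_eq_square field_simps)
  have "((\<lambda>u. if u \<le> s then (u\<^sup>2 - a\<^sup>2) / 2 else u * s - s\<^sup>2 / 2 - a\<^sup>2 / 2)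
     has_real_derivative (if t \<le> s then t else s)) (at t)"
    apply (rule deriv_glue)
    subgoal by (auto intro!: derivative_eq_intros simp: power2_eq_square power3_eq_cube algebra_simps divide_simps)
    subgoal by (auto intro!: derivative_eq_intros simp: power2_eq_square power3_eq_cube algebra_simps divide_simps)
    subgoal by (simp add: power2_eq_square power3_eq_cube algebra_simps divide_simps)
    subgoal by (simp add: power2_eq_square power3_eq_cube algebra_simps divide_simps)
    done
  then show ?thesis unfolding K_11_def e by (subst DERIV_imp_deriv) (auto simp: min_def)
qed


definition phi0 :: "real \<Rightarrow> real \<Rightarrow> real \<Rightarrow> real" where
  "phi0 a t u = (if u < t then t - max u a else 0)"
definition phi1 :: "real \<Rightarrow> real \<Rightarrow> real" where
  "phi1 t u = (if u < t then 1 else 0)"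

lemma bdd_set_integrable:
  fixes f :: "real \<Rightarrow> real"
  assumes fm: "f \<in> borel_measurable borel" and fb: "\<And>u. u \<in> {c..d} \<Longrightarrow> \<bar>f u\<bar> \<le> M"
  shows "set_integrable lborel {c..d} f"
proof (rule set_integrable_bound[where f="\<lambda>_. M"])
  show "set_integrable lborel {c..d} (\<lambda>_. M)"
    unfolding set_integrable_def
    by (intro integrable_scaleR_left integrable_real_indicator) (auto simp: emeasure_lborel_Icc_eq)
  show "set_borel_measurable lborel {c..d} f" unfolding set_borel_measurable_def using fm by measurable
  show "AE x\<in>{c..d} in lborel. norm (f x) \<le> norm M"
    using fb by (intro AE_I2) fastforce
qed

lemma three_piece:
  fixes I p P :: "real \<Rightarrow> real"
  assumes "0 \<le> a" "a \<le> m" "m \<le> B"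
    and p1: "\<And>u. u \<in> {0..a} \<Longrightarrow> I u = c"
    and p2: "\<And>u. u \<in> {a..<m} \<Longrightarrow> I u = p u"
    and p3: "\<And>u. u \<in> {m<..B} \<Longrightarrow> I u = 0"
    and dP: "\<And>u. (P has_real_derivative p u) (at u)"
  shows "(I has_integral (c * a + (P m - P a))) {0..B}"
proof -
  have c0: "((\<lambda>_. c) has_integral (a - 0) *\<^sub>R c) {0..a}" using has_integral_const_real[of c 0 a] assms(1) by simp
  have "(I has_integral (a - 0) *\<^sub>R c) {0..a}"
    by (rule has_integral_spike_finite[where S="{}", OF _ _ c0]) (use p1 in auto)
  then have i1: "(I has_integral c * a) {0..a}" by (simp add: mult.commute)
  have pi: "(p has_integral (P m - P a)) {a..m}"
    by (rule fundamental_theorem_of_calculus[OF assms(2)])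
      (use dP in \<open>auto simp: has_real_derivative_iff_has_vector_derivative[symmetric] intro: has_field_derivative_at_within\<close>)
  have i2: "(I has_integral (P m - P a)) {a..m}"
    by (rule has_integral_spike_finite[where S="{m}", OF _ _ pi]) (use p2 in auto)
  have i3: "(I has_integral 0) {m..B}"
    by (rule has_integral_spike_finite[where S="{m}" and f="\<lambda>_. 0", OF _ _ has_integral_0]) (use p3 in auto)
  have "(I has_integral (c * a + (P m - P a))) {0..m}"
    by (rule has_integral_combine[OF assms(1,2) i1 i2])
  from has_integral_combine[OF _ assms(3) this i3] assms show ?thesis by simp
qed

lemma phi0_meas[measurable]: "(\<lambda>u. phi0 a t u) \<in> borel_measurable borel"
  unfolding phi0_def by measurable
lemma phi1_meas[measurable]: "(\<lambda>u. phi1 t u) \<in> borel_measurable borel"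
  unfolding phi1_def by measurable

lemma phi_bound:
  assumes "0 \<le> a" "a \<le> t"
  shows "\<bar>phi0 a t u\<bar> \<le> t" "\<bar>phi1 t u\<bar> \<le> 1"
  using assms by (auto simp: phi0_def phi1_def)

lemma lbint_from_has_integral:
  fixes f :: "real \<Rightarrow> real"
  assumes fm: "f \<in> borel_measurable borel" and fb: "\<And>u. \<bar>f u\<bar> \<le> M"
    and hi: "(f has_integral v) {c..d}"
  shows "set_lebesgue_integral lborel {c..d} f = v"
proof -
  have "set_integrable lborel {c..d} f" using fm fb by (intro bdd_set_integrable) auto
  from set_borel_integral_eq_integral(2)[OF this] hi show ?thesis by (simp add: integral_unique)
qed

lemma K_rep00_le:
  assumes a0: "0 \<le> a" and aA: "a < A" and ts: "A \<le> s" "s \<le> t" "t \<le> B"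
  shows "set_lebesgue_integral lborel {0..B} (\<lambda>u. phi0 a t u * phi0 a s u) = K_ibm a t s"
proof (rule lbint_from_has_integral[where M="t * s"])
  show "(\<lambda>u. phi0 a t u * phi0 a s u) \<in> borel_measurable borel"
    by (intro borel_measurable_times phi0_meas)
  show "\<bar>phi0 a t u * phi0 a s u\<bar> \<le> t * s" for u
    unfolding abs_mult using phi_bound[of a t u] phi_bound[of a s u] a0 aA ts
    by (intro mult_mono) auto
  have "((\<lambda>u. phi0 a t u * phi0 a s u) has_integral
     ((t - a) * (s - a) * a + ((t * s * s - (t + s) * s^2/2 + s^3/3) - (t * s * a - (t + s) * a^2/2 + a^3/3)))) {0..B}"
    by (rule three_piece[where p="\<lambda>u. (t-u) * (s-u)" and P="\<lambda>u. t * s * u - (t + s) * u^2/2 + u^3/3"])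
       (use a0 aA ts in \<open>auto simp: phi0_def max_def intro!: derivative_eq_intros simp: algebra_simps power2_eq_square power3_eq_cube\<close>)
  moreover have "(t - a) * (s - a) * a + ((t * s * s - (t + s) * s^2/2 + s^3/3) - (t * s * a - (t + s) * a^2/2 + a^3/3)) = K_ibm a t s"
    using ts by (simp add: K_ibm_def max_def min_def power2_eq_square power3_eq_cube field_simps)
  ultimately show "((\<lambda>u. phi0 a t u * phi0 a s u) has_integral K_ibm a t s) {0..B}" by simp
qed

lemma K_ibm_sym: "K_ibm a t s = K_ibm a s t"
  by (simp add: K_ibm_def max.commute min.commute)

lemma K_rep00:
  assumes a0: "0 \<le> a" and aA: "a < A" and ts: "t \<in> {A..B}" "s \<in> {A..B}"
  shows "set_lebesgue_integral lborel {0..B} (\<lambda>u. phi0 a t u * phi0 a s u) = K_ibm a t s"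
proof (cases "s \<le> t")
  case True then show ?thesis using K_rep00_le[OF a0 aA] ts by auto
next
  case False
  then have "set_lebesgue_integral lborel {0..B} (\<lambda>u. phi0 a s u * phi0 a t u) = K_ibm a s t"
    using K_rep00_le[OF a0 aA] ts by auto
  then show ?thesis by (simp add: K_ibm_sym mult.commute)
qed

lemma K_rep01:
  assumes a0: "0 \<le> a" and aA: "a < A" and ts: "t \<in> {A..B}" "s \<in> {A..B}"
  shows "set_lebesgue_integral lborel {0..B} (\<lambda>u. phi0 a t u * phi1 s u) = K_01 a t s"
proof (rule lbint_from_has_integral[where M="t"])
  show "(\<lambda>u. phi0 a t u * phi1 s u) \<in> borel_measurable borel"
    by (intro borel_measurable_times phi0_meas phi1_meas)
  show "\<bar>phi0 a t u * phi1 s u\<bar> \<le> t" for u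
  proof -
    have "\<bar>phi0 a t u\<bar> * \<bar>phi1 s u\<bar> \<le> t * 1"
      using phi_bound[of a t u] phi_bound[of a s u] a0 aA ts by (intro mult_mono) auto
    then show ?thesis by (simp add: abs_mult)
  qed
  show "((\<lambda>u. phi0 a t u * phi1 s u) has_integral K_01 a t s) {0..B}"
  proof (cases "s \<le> t")
    case True
    have "((\<lambda>u. phi0 a t u * phi1 s u) has_integral
       ((t - a) * a + ((t * s - s^2/2) - (t * a - a^2/2)))) {0..B}"
      by (rule three_piece[where p="\<lambda>u. t - u" and P="\<lambda>u. t * u - u^2/2"])
         (use a0 aA ts True in \<open>auto simp: phi0_def phi1_def max_def intro!: derivative_eq_intros simp: algebra_simps power2_eq_square\<close>)
    moreover have "(t - a) * a + ((t * s - s^2/2) - (t * a - a^2/2)) = K_01 a t s"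
      using True by (simp add: K_01_closed k01_def power2_eq_square field_simps)
    ultimately show ?thesis by simp
  next
    case False
    have "((\<lambda>u. phi0 a t u * phi1 s u) has_integral
       ((t - a) * a + ((t * t - t^2/2) - (t * a - a^2/2)))) {0..B}"
      by (rule three_piece[where p="\<lambda>u. t - u" and P="\<lambda>u. t * u - u^2/2"])
         (use a0 aA ts False in \<open>auto simp: phi0_def phi1_def max_def intro!: derivative_eq_intros simp: algebra_simps power2_eq_square\<close>)
    moreover have "(t - a) * a + ((t * t - t^2/2) - (t * a - a^2/2)) = K_01 a t s"
      using False by (simp add: K_01_closed k01_def power2_eq_square field_simps)
    ultimately show ?thesis by simp
  qed
qed

lemma K_rep10:
  assumes a0: "0 \<le> a" and aA: "a < A" and ts: "t \<in> {A..B}" "s \<in> {A..B}"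
  shows "set_lebesgue_integral lborel {0..B} (\<lambda>u. phi1 t u * phi0 a s u) = K_10 a t s"
  using K_rep01[OF a0 aA ts(2,1)] by (simp add: K_01_closed K_10_closed mult.commute)

lemma K_rep11:
  assumes a0: "0 \<le> a" and aA: "a < A" and ts: "t \<in> {A..B}" "s \<in> {A..B}"
  shows "set_lebesgue_integral lborel {0..B} (\<lambda>u. phi1 t u * phi1 s u) = K_11 a t s"
proof (rule lbint_from_has_integral[where M="1"])
  show "(\<lambda>u. phi1 t u * phi1 s u) \<in> borel_measurable borel"
    by (intro borel_measurable_times phi1_meas)
  show "\<bar>phi1 t u * phi1 s u\<bar> \<le> 1" for u by (simp add: phi1_def)
  have "((\<lambda>u. phi1 t u * phi1 s u) has_integral (1 * a + (min t s - a))) {0..B}"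
    by (rule three_piece[where p="\<lambda>u. 1" and P="\<lambda>u. u"])
       (use a0 aA ts in \<open>auto simp: phi1_def intro!: derivative_eq_intros\<close>)
  then show "((\<lambda>u. phi1 t u * phi1 s u) has_integral K_11 a t s) {0..B}"
    by (simp add: K_11_closed)
qed


lemma green:
  fixes fd :: "nat \<Rightarrow> real \<Rightarrow> real^'m::finite" and p p1 p2 p3 :: "real \<Rightarrow> real"
  assumes "A \<le> \<alpha>" "\<alpha> \<le> \<beta>" "\<beta> \<le> B"
    and D: "\<forall>k<4. \<forall>t\<in>{A..B}. (fd k has_vector_derivative fd (Suc k) t) (at t within {A..B})"
    and d0: "\<And>s. (p has_real_derivative p1 s) (at s)" and d1: "\<And>s. (p1 has_real_derivative p2 s) (at s)"
    and d2: "\<And>s. (p2 has_real_derivative p3 s) (at s)" and d3: "\<And>s. (p3 has_real_derivative 0) (at s)"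
  shows "((\<lambda>s. p s *\<^sub>R fd 4 s) has_integral
     ((p \<beta> *\<^sub>R fd 3 \<beta> - p1 \<beta> *\<^sub>R fd 2 \<beta> + p2 \<beta> *\<^sub>R fd 1 \<beta> - p3 \<beta> *\<^sub>R fd 0 \<beta>)
    - (p \<alpha> *\<^sub>R fd 3 \<alpha> - p1 \<alpha> *\<^sub>R fd 2 \<alpha> + p2 \<alpha> *\<^sub>R fd 1 \<alpha> - p3 \<alpha> *\<^sub>R fd 0 \<alpha>))) {\<alpha>..\<beta>}"
proof (rule fundamental_theorem_of_calculus[OF assms(2)])
  fix x assume x: "x \<in> {\<alpha>..\<beta>}"
  have sub: "{\<alpha>..\<beta>} \<subseteq> {A..B}" using assms(1,3) by auto
  have xi: "x \<in> {A..B}" using x sub by auto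
  have fdk: "(fd k has_vector_derivative fd (Suc k) x) (at x within {\<alpha>..\<beta>})" if "k < 4" for k
    using D that xi sub by (meson has_vector_derivative_within_subset)
  have pd: "(q has_real_derivative q' x) (at x within {\<alpha>..\<beta>})" if "\<And>s. (q has_real_derivative q' s) (at s)" for q q'
    using that by (rule has_field_derivative_at_within)
  have e3: "((\<lambda>s. p s *\<^sub>R fd 3 s) has_vector_derivative p x *\<^sub>R fd 4 x + p1 x *\<^sub>R fd 3 x) (at x within {\<alpha>..\<beta>})"
    using has_vector_derivative_scaleR[OF pd[OF d0] fdk[of 3]] by (simp add: numeral_eq_Suc)
  have e2: "((\<lambda>s. p1 s *\<^sub>R fd 2 s) has_vector_derivative p1 x *\<^sub>R fd 3 x + p2 x *\<^sub>R fd 2 x) (at x within {\<alpha>..\<beta>})"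
    using has_vector_derivative_scaleR[OF pd[OF d1] fdk[of 2]] by (simp add: numeral_eq_Suc)
  have e1: "((\<lambda>s. p2 s *\<^sub>R fd 1 s) has_vector_derivative p2 x *\<^sub>R fd 2 x + p3 x *\<^sub>R fd 1 x) (at x within {\<alpha>..\<beta>})"
    using has_vector_derivative_scaleR[OF pd[OF d2] fdk[of 1]] by (simp add: numeral_eq_Suc)
  have e0: "((\<lambda>s. p3 s *\<^sub>R fd 0 s) has_vector_derivative p3 x *\<^sub>R fd 1 x + 0 *\<^sub>R fd 0 x) (at x within {\<alpha>..\<beta>})"
    using has_vector_derivative_scaleR[OF pd[OF d3] fdk[of 0]] by simp
  have "((\<lambda>s. p s *\<^sub>R fd 3 s - p1 s *\<^sub>R fd 2 s + p2 s *\<^sub>R fd 1 s - p3 s *\<^sub>R fd 0 s) has_vector_derivative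
      (p x *\<^sub>R fd 4 x + p1 x *\<^sub>R fd 3 x) - (p1 x *\<^sub>R fd 3 x + p2 x *\<^sub>R fd 2 x)
      + (p2 x *\<^sub>R fd 2 x + p3 x *\<^sub>R fd 1 x) - (p3 x *\<^sub>R fd 1 x + 0 *\<^sub>R fd 0 x)) (at x within {\<alpha>..\<beta>})"
    by (intro has_vector_derivative_diff has_vector_derivative_add e0 e1 e2 e3)
  then show "((\<lambda>s. p s *\<^sub>R fd 3 s - p1 s *\<^sub>R fd 2 s + p2 s *\<^sub>R fd 1 s - p3 s *\<^sub>R fd 0 s) has_vector_derivative
      p x *\<^sub>R fd 4 x) (at x within {\<alpha>..\<beta>})"
    by (simp add: algebra_simps)
qed


lemma set_integrable_bdd_scaleR:
  fixes f :: "real \<Rightarrow> 'b::{banach, second_countable_topology}" and g :: "real \<Rightarrow> real"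
  assumes sets: "sets M = sets borel" and fi: "set_integrable M S f"
    and gm: "g \<in> borel_measurable borel" and gb: "\<And>s. s \<in> S \<Longrightarrow> \<bar>g s\<bar> \<le> C"
  shows "set_integrable M S (\<lambda>s. g s *\<^sub>R f s)"
proof (rule set_integrable_bound[where f="\<lambda>x. C *\<^sub>R f x"])
  show "set_integrable M S (\<lambda>x. C *\<^sub>R f x)"
  proof -
    have "integrable M (\<lambda>x. C *\<^sub>R (indicator S x *\<^sub>R f x))"
      using fi unfolding set_integrable_def by (intro integrable_scaleR_right)
    then show ?thesis unfolding set_integrable_def by (simp add: scaleR_left_commute mult.commute)
  qed
  have fm: "(\<lambda>x. indicator S x *\<^sub>R f x) \<in> borel_measurable M"
    using fi unfolding set_integrable_def by (rule borel_measurable_integrable)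
  have gM: "g \<in> borel_measurable M" using gm by (simp add: measurable_cong_sets[OF sets refl])
  have "(\<lambda>x. g x *\<^sub>R (indicator S x *\<^sub>R f x)) \<in> borel_measurable M"
    using gM fm by (rule borel_measurable_scaleR)
  then show "set_borel_measurable M S (\<lambda>s. g s *\<^sub>R f s)"
    unfolding set_borel_measurable_def by (simp add: scaleR_left_commute mult.commute)
  show "AE x\<in>S in M. norm (g x *\<^sub>R f x) \<le> norm (C *\<^sub>R f x)"
  proof (intro AE_I2 impI)
    fix x assume "x \<in> S"
    then have "\<bar>g x\<bar> * norm (f x) \<le> \<bar>C\<bar> * norm (f x)"
      using gb[of x] by (intro mult_right_mono) auto
    then show "norm (g x *\<^sub>R f x) \<le> norm (C *\<^sub>R f x)" by simp
  qed
qed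

lemma set_integral_return:
  fixes f :: "real \<Rightarrow> 'b::{banach, second_countable_topology}"
  assumes "f \<in> borel_measurable borel" "S \<in> sets borel"
  shows "set_lebesgue_integral (return borel x) S f = (if x \<in> S then f x else 0)"
  unfolding set_lebesgue_integral_def using assms
  by (subst integral_return) (auto intro!: borel_measurable_scaleR)


lemma vint_zeta0:
  fixes fd :: "nat \<Rightarrow> real \<Rightarrow> real^'m::finite"
  assumes "A \<le> B" "g \<in> borel_measurable borel"
  shows "vint A B (zeta0 a A B fd) g =
    g A *\<^sub>R (fd 3 A - (6 * (A + a) / ((A + 3 * a) * (A - a)\<^sup>2)) *\<^sub>R fd 1 A
                           + (12 * A / ((A + 3 * a) * (A - a)^3)) *\<^sub>R fd 0 A)
    + (g B *\<^sub>R (- fd 3 B) + set_lebesgue_integral lborel {A..B} (\<lambda>t. g t *\<^sub>R fd 4 t))"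
  unfolding vint_def zeta0_def using assms
  by (simp add: set_integral_return borel_measurable_scaleR)

lemma vint_zeta1:
  fixes fd :: "nat \<Rightarrow> real \<Rightarrow> real^'m::finite"
  assumes "A \<le> B" "g \<in> borel_measurable borel"
  shows "vint A B (zeta1 a A B fd) g =
    g A *\<^sub>R (- fd 2 A + (4 * (A + 2 * a) / ((A + 3 * a) * (A - a))) *\<^sub>R fd 1 A
                           - (6 * (A + a) / ((A + 3 * a) * (A - a)\<^sup>2)) *\<^sub>R fd 0 A)
    + g B *\<^sub>R fd 2 B"
  unfolding vint_def zeta1_def using assms
  by (simp add: set_integral_return borel_measurable_scaleR)

lemma bounded_on_Icc:
  fixes g :: "real \<Rightarrow> real"
  assumes "continuous_on {A..B} g"
  obtains C where "\<And>s. s \<in> {A..B} \<Longrightarrow> \<bar>g s\<bar> \<le> C"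
proof -
  have "compact (g ` {A..B})" by (rule compact_continuous_image[OF assms compact_Icc])
  then obtain C where "\<forall>x\<in>g ` {A..B}. norm x \<le> C" using compact_imp_bounded bounded_iff by metis
  then have "\<And>s. s \<in> {A..B} \<Longrightarrow> \<bar>g s\<bar> \<le> C" by auto
  then show ?thesis by (rule that)
qed

lemma lint_fd4:
  fixes fd :: "nat \<Rightarrow> real \<Rightarrow> real^'m::finite" and g :: "real \<Rightarrow> real"
  assumes int4: "set_integrable lborel {A..B} (fd 4)" and gc: "continuous_on UNIV g"
    and hi: "((\<lambda>s. g s *\<^sub>R fd 4 s) has_integral V) {A..B}"
  shows "set_lebesgue_integral lborel {A..B} (\<lambda>t. g t *\<^sub>R fd 4 t) = V"
proof -
  obtain C where C: "\<And>s. s \<in> {A..B} \<Longrightarrow> \<bar>g s\<bar> \<le> C"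
    using bounded_on_Icc[of A B g] gc continuous_on_subset by blast
  have gm: "g \<in> borel_measurable borel" using gc by (rule borel_measurable_continuous_onI)
  have "set_integrable lborel {A..B} (\<lambda>t. g t *\<^sub>R fd 4 t)"
    by (rule set_integrable_bdd_scaleR[OF _ int4 gm C]) simp
  from set_borel_integral_eq_integral(2)[OF this] hi show ?thesis by (simp add: integral_unique)
qed


lemma coef_c1:
  assumes "0 \<le> a" "a < A" "A \<le> t"
  shows "- (6 * (A + a) / ((A + 3 * a) * (A - a)\<^sup>2)) * K_ibm a t A + (4 * (A + 2 * a) / ((A + 3 * a) * (A - a))) * k01 a t A - (t - A) = 0"
proof -
  have kk: "K_ibm a t A = t * (A\<^sup>2 - a\<^sup>2) / 2 - a\<^sup>2 * (A - a) / 2 - (A ^ 3 - a ^ 3) / 6"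
    "k01 a t A = t * A - A\<^sup>2 / 2 - a\<^sup>2 / 2" using assms by (auto simp: K_ibm_def k01_def max_def min_def)
  have gen: "\<And>e d K k. e \<noteq> 0 \<Longrightarrow> d \<noteq> 0 \<Longrightarrow>
     (- (6 * (A + a) / (e * d\<^sup>2)) * K + (4 * (A + 2 * a) / (e * d)) * k - (t - A)) * (e * d\<^sup>2)
      = - 6 * (A + a) * K + 4 * (A + 2 * a) * d * k - (t - A) * e * d\<^sup>2"
    by (simp add: field_simps power2_eq_square)
  have ne1: "A + 3 * a \<noteq> 0" and ne2: "A - a \<noteq> 0" using assms by auto
  have num: "- 6 * (A + a) * K_ibm a t A + 4 * (A + 2 * a) * (A - a) * k01 a t A - (t - A) * (A + 3 * a) * (A - a)\<^sup>2 = 0"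
    unfolding kk by algebra
  from gen[OF ne1 ne2, of "K_ibm a t A" "k01 a t A"] num ne1 ne2 show ?thesis by simp
qed

lemma coef_c0:
  assumes "0 \<le> a" "a < A" "A \<le> t"
  shows "(12 * A / ((A + 3 * a) * (A - a)^3)) * K_ibm a t A - (6 * (A + a) / ((A + 3 * a) * (A - a)\<^sup>2)) * k01 a t A - 1 = 0"
proof -
  have kk: "K_ibm a t A = t * (A\<^sup>2 - a\<^sup>2) / 2 - a\<^sup>2 * (A - a) / 2 - (A ^ 3 - a ^ 3) / 6"
    "k01 a t A = t * A - A\<^sup>2 / 2 - a\<^sup>2 / 2" using assms by (auto simp: K_ibm_def k01_def max_def min_def)
  have gen: "\<And>e d K k. e \<noteq> 0 \<Longrightarrow> d \<noteq> 0 \<Longrightarrow>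
     ((12 * A / (e * d^3)) * K - (6 * (A + a) / (e * d\<^sup>2)) * k - 1) * (e * d^3)
      = 12 * A * K - 6 * (A + a) * d * k - e * d^3"
    by (simp add: field_simps power2_eq_square power3_eq_cube)
  have ne1: "A + 3 * a \<noteq> 0" and ne2: "A - a \<noteq> 0" using assms by auto
  have num: "12 * A * K_ibm a t A - 6 * (A + a) * (A - a) * k01 a t A - (A + 3 * a) * (A - a)^3 = 0"
    unfolding kk by algebra
  from gen[OF ne1 ne2, of "K_ibm a t A" "k01 a t A"] num ne1 ne2 show ?thesis by simp
qed

lemma coef_d1:
  assumes "0 \<le> a" "a < A" "A \<le> t"
  shows "- (6 * (A + a) / ((A + 3 * a) * (A - a)\<^sup>2)) * k01 a A t + (4 * (A + 2 * a) / ((A + 3 * a) * (A - a))) * A - 1 = 0"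
proof -
  have kk: "k01 a A t = (A\<^sup>2 - a\<^sup>2) / 2" using assms by (auto simp: k01_def power2_eq_square field_simps)
  have gen: "\<And>e d K. e \<noteq> 0 \<Longrightarrow> d \<noteq> 0 \<Longrightarrow>
     (- (6 * (A + a) / (e * d\<^sup>2)) * K + (4 * (A + 2 * a) / (e * d)) * A - 1) * (e * d\<^sup>2)
      = - 6 * (A + a) * K + 4 * (A + 2 * a) * d * A - e * d\<^sup>2"
    by (simp add: field_simps power2_eq_square)
  have ne1: "A + 3 * a \<noteq> 0" and ne2: "A - a \<noteq> 0" using assms by auto
  have num: "- 6 * (A + a) * k01 a A t + 4 * (A + 2 * a) * (A - a) * A - (A + 3 * a) * (A - a)\<^sup>2 = 0"
    unfolding kk by algebra
  from gen[OF ne1 ne2, of "k01 a A t"] num ne1 ne2 show ?thesis by simp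
qed

lemma coef_d0:
  assumes "0 \<le> a" "a < A" "A \<le> t"
  shows "(12 * A / ((A + 3 * a) * (A - a)^3)) * k01 a A t - (6 * (A + a) / ((A + 3 * a) * (A - a)\<^sup>2)) * A = 0"
proof -
  have kk: "k01 a A t = (A\<^sup>2 - a\<^sup>2) / 2" using assms by (auto simp: k01_def power2_eq_square field_simps)
  have gen: "\<And>e d K. e \<noteq> 0 \<Longrightarrow> d \<noteq> 0 \<Longrightarrow>
     ((12 * A / (e * d^3)) * K - (6 * (A + a) / (e * d\<^sup>2)) * A) * (e * d^3)
      = 12 * A * K - 6 * (A + a) * d * A"
    by (simp add: field_simps power2_eq_square power3_eq_cube)
  have ne1: "A + 3 * a \<noteq> 0" and ne2: "A - a \<noteq> 0" using assms by auto
  have num: "12 * A * k01 a A t - 6 * (A + a) * (A - a) * A = 0"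
    unfolding kk by algebra
  have p: "((12 * A / ((A + 3 * a) * (A - a)^3)) * k01 a A t - (6 * (A + a) / ((A + 3 * a) * (A - a)\<^sup>2)) * A) * ((A + 3 * a) * (A - a)^3) = 0"
    using gen[OF ne1 ne2, of "k01 a A t"] num by linarith
  have "(A + 3 * a) * (A - a)^3 \<noteq> 0" using ne1 ne2 by simp
  with p show ?thesis by (metis mult_eq_0_iff)
qed


lemma K_ibm_cont: "continuous_on UNIV (K_ibm a t)"
  unfolding K_ibm_def by (intro continuous_intros) auto

lemma k01_meas: "k01 a t \<in> borel_measurable borel"
  unfolding k01_def by measurable

lemma green0:
  fixes fd :: "nat \<Rightarrow> real \<Rightarrow> real^'m::finite"
  assumes a0: "0 \<le> a" and aA: "a < A" and AB: "A < B"
    and D: "\<forall>k<4. \<forall>t\<in>{A..B}. (fd k has_vector_derivative fd (Suc k) t) (at t within {A..B})"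
    and int4: "set_integrable lborel {A..B} (fd 4)" and t: "t \<in> {A..B}"
  shows "vint A B (zeta0 a A B fd) (K_ibm a t) + vint A B (zeta1 a A B fd) (K_01 a t) = fd 0 t"
proof -
  define P where "P s = t * (s\<^sup>2 - a\<^sup>2) / 2 - a\<^sup>2 * (s - a) / 2 - (s ^ 3 - a ^ 3) / 6" for s
  define P1 where "P1 s = t * s - a\<^sup>2 / 2 - s\<^sup>2 / 2" for s
  define P2 where "P2 s = t - s" for s
  define P3 where "P3 (s::real) = (-1::real)" for s
  define Q where "Q s = s * (t\<^sup>2 - a\<^sup>2) / 2 - a\<^sup>2 * (t - a) / 2 - (t ^ 3 - a ^ 3) / 6" for s
  define Q1 where "Q1 (s::real) = (t\<^sup>2 - a\<^sup>2) / 2" for s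
  define Q2 where "Q2 (s::real) = (0::real)" for s
  define GP where "GP x = P x *\<^sub>R fd 3 x - P1 x *\<^sub>R fd 2 x + P2 x *\<^sub>R fd 1 x - P3 x *\<^sub>R fd 0 x" for x
  define GQ where "GQ x = Q x *\<^sub>R fd 3 x - Q1 x *\<^sub>R fd 2 x + Q2 x *\<^sub>R fd 1 x - Q2 x *\<^sub>R fd 0 x" for x
  have tA: "A \<le> t" "t \<le> B" using t by auto
  have g1: "((\<lambda>s. P s *\<^sub>R fd 4 s) has_integral (GP t - GP A)) {A..t}"
    unfolding GP_def
    by (rule green[OF order.refl tA D]) (auto simp: P_def P1_def P2_def P3_def intro!: derivative_eq_intros simp: algebra_simps power2_eq_square power3_eq_cube)
  have g2: "((\<lambda>s. Q s *\<^sub>R fd 4 s) has_integral (GQ B - GQ t)) {t..B}"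
    unfolding GQ_def
    by (rule green[OF tA order.refl D]) (auto simp: Q_def Q1_def Q2_def intro!: derivative_eq_intros simp: field_simps power2_eq_square)
  have h1: "((\<lambda>s. K_ibm a t s *\<^sub>R fd 4 s) has_integral (GP t - GP A)) {A..t}"
    by (rule has_integral_eq[OF _ g1]) (auto simp: P_def K_ibm_def max_def min_def)
  have h2: "((\<lambda>s. K_ibm a t s *\<^sub>R fd 4 s) has_integral (GQ B - GQ t)) {t..B}"
    by (rule has_integral_eq[OF _ g2]) (auto simp: Q_def K_ibm_def max_def min_def power2_eq_square power3_eq_cube field_simps)
  have h: "((\<lambda>s. K_ibm a t s *\<^sub>R fd 4 s) has_integral ((GP t - GP A) + (GQ B - GQ t))) {A..B}"
    by (rule has_integral_combine[OF tA h1 h2])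
  have L: "set_lebesgue_integral lborel {A..B} (\<lambda>s. K_ibm a t s *\<^sub>R fd 4 s) = (GP t - GP A) + (GQ B - GQ t)"
    by (rule lint_fd4[where fd=fd and g="K_ibm a t", OF int4 K_ibm_cont[of a t] h])
  have Km: "K_ibm a t \<in> borel_measurable borel" by (rule borel_measurable_continuous_onI[OF K_ibm_cont[of a t]])
  have e01: "K_01 a t = k01 a t" by (simp add: fun_eq_iff K_01_closed)
  define \<alpha> where "\<alpha> = 6 * (A + a) / ((A + 3 * a) * (A - a)\<^sup>2)"
  define \<beta> where "\<beta> = 12 * A / ((A + 3 * a) * (A - a)^3)"
  define \<gamma> where "\<gamma> = 4 * (A + 2 * a) / ((A + 3 * a) * (A - a))"
  have c1: "- \<alpha> * K_ibm a t A + \<gamma> * k01 a t A - (t - A) = 0"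
    unfolding \<alpha>_def \<gamma>_def by (rule coef_c1[OF a0 aA tA(1)])
  have c0: "\<beta> * K_ibm a t A - \<alpha> * k01 a t A - 1 = 0"
    unfolding \<alpha>_def \<beta>_def by (rule coef_c0[OF a0 aA tA(1)])
  have sc: "P A = K_ibm a t A" "P1 A = k01 a t A" "P2 A = t - A" "P3 A = -1" "P3 t = -1"
    "P t = Q t" "P1 t = Q1 t" "P2 t = 0" "Q B = K_ibm a t B" "Q1 B = k01 a t B" "Q2 B = 0" "Q2 t = 0"
    using tA unfolding P_def P1_def P2_def P3_def Q_def Q1_def Q2_def
    by (auto simp: K_ibm_def k01_def max_def min_def field_simps power2_eq_square power3_eq_cube)
  show ?thesis
    unfolding vint_zeta0[OF less_imp_le[OF AB] Km] e01 vint_zeta1[OF less_imp_le[OF AB] k01_meas] L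
    unfolding \<alpha>_def[symmetric] \<beta>_def[symmetric] \<gamma>_def[symmetric] GP_def GQ_def sc
    unfolding vec_eq_iff
    apply (rule allI)
    apply (simp only: vector_add_component vector_minus_component vector_scaleR_component vector_uminus_component real_scaleR_def)
    using c0 c1 apply algebra
    done
qed

lemma k01_alt: "k01 a s t = s * min s t - (min s t)\<^sup>2 / 2 - a\<^sup>2 / 2"
  by (auto simp: k01_def min_def power2_eq_square field_simps)

lemma k01_cont: "continuous_on UNIV (\<lambda>s. k01 a s t)"
  unfolding k01_alt by (intro continuous_intros) auto

lemma min_cont: "continuous_on UNIV (\<lambda>s. min t s :: real)"
  by (intro continuous_intros)

lemma green1:
  fixes fd :: "nat \<Rightarrow> real \<Rightarrow> real^'m::finite"
  assumes a0: "0 \<le> a" and aA: "a < A" and AB: "A < B"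
    and D: "\<forall>k<4. \<forall>t\<in>{A..B}. (fd k has_vector_derivative fd (Suc k) t) (at t within {A..B})"
    and int4: "set_integrable lborel {A..B} (fd 4)" and t: "t \<in> {A..B}"
  shows "vint A B (zeta0 a A B fd) (K_10 a t) + vint A B (zeta1 a A B fd) (K_11 a t) = fd 1 t"
proof -
  define P where "P s = (s\<^sup>2 - a\<^sup>2) / 2" for s
  define P1 where "P1 (s::real) = s" for s
  define P2 where "P2 (s::real) = (1::real)" for s
  define P3 where "P3 (s::real) = (0::real)" for s
  define Q where "Q s = s * t - t\<^sup>2 / 2 - a\<^sup>2 / 2" for s
  define Q1 where "Q1 (s::real) = t" for s
  define GP where "GP x = P x *\<^sub>R fd 3 x - P1 x *\<^sub>R fd 2 x + P2 x *\<^sub>R fd 1 x - P3 x *\<^sub>R fd 0 x" for x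
  define GQ where "GQ x = Q x *\<^sub>R fd 3 x - Q1 x *\<^sub>R fd 2 x + P3 x *\<^sub>R fd 1 x - P3 x *\<^sub>R fd 0 x" for x
  have tA: "A \<le> t" "t \<le> B" using t by auto
  have g1: "((\<lambda>s. P s *\<^sub>R fd 4 s) has_integral (GP t - GP A)) {A..t}"
    unfolding GP_def
    by (rule green[OF order.refl tA D]) (auto simp: P_def P1_def P2_def P3_def intro!: derivative_eq_intros simp: algebra_simps power2_eq_square)
  have g2: "((\<lambda>s. Q s *\<^sub>R fd 4 s) has_integral (GQ B - GQ t)) {t..B}"
    unfolding GQ_def
    by (rule green[OF tA order.refl D]) (auto simp: Q_def Q1_def P3_def intro!: derivative_eq_intros simp: field_simps power2_eq_square)
  have e10: "K_10 a t = (\<lambda>s. k01 a s t)" by (simp add: fun_eq_iff K_10_closed)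
  have e11: "K_11 a t = (\<lambda>s. min t s)" by (simp add: fun_eq_iff K_11_closed)
  have h1: "((\<lambda>s. k01 a s t *\<^sub>R fd 4 s) has_integral (GP t - GP A)) {A..t}"
    by (rule has_integral_eq[OF _ g1]) (auto simp: P_def k01_def power2_eq_square field_simps)
  have h2: "((\<lambda>s. k01 a s t *\<^sub>R fd 4 s) has_integral (GQ B - GQ t)) {t..B}"
    by (rule has_integral_eq[OF _ g2]) (auto simp: Q_def k01_def power2_eq_square field_simps)
  have h: "((\<lambda>s. k01 a s t *\<^sub>R fd 4 s) has_integral ((GP t - GP A) + (GQ B - GQ t))) {A..B}"
    by (rule has_integral_combine[OF tA h1 h2])
  have L: "set_lebesgue_integral lborel {A..B} (\<lambda>s. k01 a s t *\<^sub>R fd 4 s) = (GP t - GP A) + (GQ B - GQ t)"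
    by (rule lint_fd4[where fd=fd and g="\<lambda>s. k01 a s t", OF int4 k01_cont h])
  have Km: "(\<lambda>s. k01 a s t) \<in> borel_measurable borel" by (rule borel_measurable_continuous_onI[OF k01_cont])
  have Mm: "(\<lambda>s. min t s) \<in> borel_measurable borel" by (rule borel_measurable_continuous_onI[OF min_cont])
  define \<alpha> where "\<alpha> = 6 * (A + a) / ((A + 3 * a) * (A - a)\<^sup>2)"
  define \<beta> where "\<beta> = 12 * A / ((A + 3 * a) * (A - a)^3)"
  define \<gamma> where "\<gamma> = 4 * (A + 2 * a) / ((A + 3 * a) * (A - a))"
  have c1: "- \<alpha> * k01 a A t + \<gamma> * A - 1 = 0"
    unfolding \<alpha>_def \<gamma>_def by (rule coef_d1[OF a0 aA tA(1)])
  have c0: "\<beta> * k01 a A t - \<alpha> * A = 0"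
    unfolding \<alpha>_def \<beta>_def by (rule coef_d0[OF a0 aA tA(1)])
  have sc: "P A = k01 a A t" "P1 A = A" "P2 A = 1" "P3 A = 0" "P3 t = 0" "P3 B = 0"
    "P t = Q t" "P1 t = Q1 t" "P2 t = 1" "Q B = k01 a B t" "Q1 B = t" "min t A = A" "min t B = t"
    using tA unfolding P_def P1_def P2_def P3_def Q_def Q1_def
    by (auto simp: k01_def field_simps power2_eq_square)
  show ?thesis
    unfolding e10 e11 vint_zeta0[OF less_imp_le[OF AB] Km] vint_zeta1[OF less_imp_le[OF AB] Mm] L
    unfolding \<alpha>_def[symmetric] \<beta>_def[symmetric] \<gamma>_def[symmetric] GP_def GQ_def sc
    unfolding vec_eq_iff
    apply (rule allI)
    apply (simp only: vector_add_component vector_minus_component vector_scaleR_component vector_uminus_component real_scaleR_def)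
    using c0 c1 apply algebra
    done
qed


definition bm :: "(real \<Rightarrow> real) \<Rightarrow> bool" where
  "bm f \<longleftrightarrow> f \<in> borel_measurable borel \<and> (\<exists>N. \<forall>u. \<bar>f u\<bar> \<le> N)"

lemma bmI: "f \<in> borel_measurable borel \<Longrightarrow> (\<And>u. \<bar>f u\<bar> \<le> N) \<Longrightarrow> bm f"
  unfolding bm_def by blast

lemma bm_mult: "bm f \<Longrightarrow> bm g \<Longrightarrow> bm (\<lambda>u. f u * g u)"
  unfolding bm_def
proof (elim conjE exE, intro conjI)
  fix N M assume "\<forall>u. \<bar>f u\<bar> \<le> N" "\<forall>u. \<bar>g u\<bar> \<le> M"
  then show "\<exists>K. \<forall>u. \<bar>f u * g u\<bar> \<le> K"
    by (intro exI[of _ "N * M"] allI) (auto simp: abs_mult intro!: mult_mono)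
qed (rule borel_measurable_times)

lemma bm_add: "bm f \<Longrightarrow> bm g \<Longrightarrow> bm (\<lambda>u. f u + g u)"
  unfolding bm_def
proof (elim conjE exE, intro conjI)
  fix N M assume "\<forall>u. \<bar>f u\<bar> \<le> N" "\<forall>u. \<bar>g u\<bar> \<le> M"
  then show "\<exists>K. \<forall>u. \<bar>f u + g u\<bar> \<le> K"
    by (intro exI[of _ "N + M"] allI) (auto intro: order.trans[OF abs_triangle_ineq] add_mono)
qed (rule borel_measurable_add)

lemma bm_const: "bm (\<lambda>_. c)" by (rule bmI[of _ "\<bar>c\<bar>"]) auto

lemma bm_cmult: "bm f \<Longrightarrow> bm (\<lambda>u. c * f u)" using bm_mult[OF bm_const] by blast

lemma bm_diff: "bm f \<Longrightarrow> bm g \<Longrightarrow> bm (\<lambda>u. f u - g u)"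
  using bm_add[of f "\<lambda>u. (-1) * g u"] bm_cmult[of g "-1"] by simp

lemma bm_sum: "finite K \<Longrightarrow> (\<And>k. k \<in> K \<Longrightarrow> bm (f k)) \<Longrightarrow> bm (\<lambda>u. \<Sum>k\<in>K. f k u)"
  by (induction K rule: finite_induct) (auto intro: bm_add bm_const)

lemma bm_sum_list: "(\<And>x. x \<in> set xs \<Longrightarrow> bm (f x)) \<Longrightarrow> bm (\<lambda>u. sum_list (map (\<lambda>x. f x u) xs))"
  by (induction xs) (auto intro: bm_add bm_const)

lemma bm_set_integrable: "bm f \<Longrightarrow> set_integrable lborel {c..d} f"
  unfolding bm_def by (auto intro: bdd_set_integrable)

lemma lint_add:
  "bm f \<Longrightarrow> bm g \<Longrightarrow> set_lebesgue_integral lborel {c..d} (\<lambda>u. f u + g u)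
     = set_lebesgue_integral lborel {c..d} f + set_lebesgue_integral lborel {c..d} g"
  by (intro set_integral_add(2) bm_set_integrable)

lemma lint_sum:
  "finite K \<Longrightarrow> (\<And>k. k \<in> K \<Longrightarrow> bm (f k)) \<Longrightarrow> set_lebesgue_integral lborel {c..d} (\<lambda>u. \<Sum>k\<in>K. f k u)
     = (\<Sum>k\<in>K. set_lebesgue_integral lborel {c..d} (f k))"
proof (induction K rule: finite_induct)
  case (insert x F)
  then show ?case by (simp add: lint_add[OF _ bm_sum] )
qed simp

lemma lint_sum_list:
  "(\<And>x. x \<in> set xs \<Longrightarrow> bm (f x)) \<Longrightarrow> set_lebesgue_integral lborel {c..d} (\<lambda>u. sum_list (map (\<lambda>x. f x u) xs))
     = sum_list (map (\<lambda>x. set_lebesgue_integral lborel {c..d} (f x)) xs)"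
proof (induction xs)
  case (Cons x xs)
  then show ?case by (simp add: lint_add[OF _ bm_sum_list])
qed simp

lemma lint_cmult: "set_lebesgue_integral lborel S (\<lambda>u. c * f u) = c * set_lebesgue_integral lborel S (f::real\<Rightarrow>real)"
proof -
  have "set_lebesgue_integral lborel S (\<lambda>u. c * f u) = (LBINT x. c * (indicator S x * f x))"
    unfolding set_lebesgue_integral_def by (simp add: mult_ac)
  also have "\<dots> = c * (LBINT x. indicator S x * f x)" by (rule integral_mult_right_zero)
  finally show ?thesis by (simp add: set_lebesgue_integral_def)
qed

lemma set_integral_component:
  fixes f :: "real \<Rightarrow> real^'m::finite"
  assumes "set_integrable M S f"
  shows "set_lebesgue_integral M S f $ i = set_lebesgue_integral M S (\<lambda>t. f t $ i)"
  using integral_bounded_linear[OF bounded_linear_vec_nth[of i] assms[unfolded set_integrable_def]]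
  unfolding set_lebesgue_integral_def by simp

lemma set_integrable_component:
  fixes f :: "real \<Rightarrow> real^'m::finite"
  assumes "set_integrable M S f"
  shows "set_integrable M S (\<lambda>t. f t $ i)"
  using integrable_bounded_linear[OF bounded_linear_vec_nth[of i] assms[unfolded set_integrable_def]]
  unfolding set_integrable_def by simp

lemma vmeas_ok_Cons: "vmeas_ok A B ((\<mu>, h) # D) \<longleftrightarrow> sets \<mu> = sets borel \<and> set_integrable \<mu> {A..B} h \<and> vmeas_ok A B D"
  by (auto simp: vmeas_ok_def)

lemma vmeas_ok_Nil: "vmeas_ok A B []" by (simp add: vmeas_ok_def)

lemma vint_Nil: "vint A B [] F = 0" by (simp add: vint_def)
lemma vint_Cons: "vint A B ((\<mu>, h) # D) F = set_lebesgue_integral \<mu> {A..B} (\<lambda>t. F t *\<^sub>R h t) + vint A B D F"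
  by (simp add: vint_def)

lemma vint_cong:
  assumes "vmeas_ok A B D" "\<And>t. t \<in> {A..B} \<Longrightarrow> F t = G t"
  shows "vint A B D F = vint A B D G"
  using assms(1)
proof (induction D)
  case (Cons x D)
  obtain \<mu> h where x: "x = (\<mu>, h)" by (cases x)
  have "set_lebesgue_integral \<mu> {A..B} (\<lambda>t. F t *\<^sub>R h t) = set_lebesgue_integral \<mu> {A..B} (\<lambda>t. G t *\<^sub>R h t)"
    using Cons.prems assms(2) unfolding x vmeas_ok_Cons
    by (intro set_lebesgue_integral_cong) auto
  then show ?case using Cons unfolding x vmeas_ok_Cons vint_Cons by simp
qed (simp add: vint_Nil)

lemma vint_comp:
  fixes D :: "('m::finite) vmeas"
  assumes "vmeas_ok A B D" "bm F"
  shows "vint A B D F $ i = sum_list (map (\<lambda>(\<mu>, h). set_lebesgue_integral \<mu> {A..B} (\<lambda>t. F t * h t $ i)) D)"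
  using assms(1)
proof (induction D)
  case (Cons x D)
  obtain \<mu> h where x: "x = (\<mu>, h)" by (cases x)
  have ok: "sets \<mu> = sets borel" "set_integrable \<mu> {A..B} h" "vmeas_ok A B D"
    using Cons.prems unfolding x vmeas_ok_Cons by auto
  obtain N where N: "\<And>u. \<bar>F u\<bar> \<le> N" using assms(2) unfolding bm_def by blast
  have si: "set_integrable \<mu> {A..B} (\<lambda>t. F t *\<^sub>R h t)"
    using set_integrable_bdd_scaleR[OF ok(1,2), of F N] assms(2) N unfolding bm_def by blast
  show ?case unfolding x vint_Cons using Cons.IH[OF ok(3)] set_integral_component[OF si, of i] by simp
qed (simp add: vint_Nil)

lemma vint_cmult: "vint A B D (\<lambda>t. c * F t) = c *\<^sub>R vint A B D F"
proof (induction D)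
  case (Cons x D)
  obtain \<mu> h where x: "x = (\<mu>, h)" by (cases x)
  have "set_lebesgue_integral \<mu> {A..B} (\<lambda>t. (c * F t) *\<^sub>R h t) = c *\<^sub>R set_lebesgue_integral \<mu> {A..B} (\<lambda>t. F t *\<^sub>R h t)"
  proof -
    have "set_lebesgue_integral \<mu> {A..B} (\<lambda>t. (c * F t) *\<^sub>R h t) = (LINT t|\<mu>. c *\<^sub>R (indicator {A..B} t *\<^sub>R (F t *\<^sub>R h t)))"
      unfolding set_lebesgue_integral_def by (simp add: mult_ac)
    also have "\<dots> = c *\<^sub>R (LINT t|\<mu>. indicator {A..B} t *\<^sub>R (F t *\<^sub>R h t))" by (rule integral_scaleR_right)
    finally show ?thesis by (simp add: set_lebesgue_integral_def)
  qed
  then show ?case using Cons unfolding x vint_Cons by (simp add: scaleR_right_distrib)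
qed (simp add: vint_Nil)

lemma vint_add:
  fixes D :: "('m::finite) vmeas"
  assumes "vmeas_ok A B D" "bm F" "bm G"
  shows "vint A B D (\<lambda>t. F t + G t) = vint A B D F + vint A B D G"
  using assms(1)
proof (induction D)
  case (Cons x D)
  obtain \<mu> h where x: "x = (\<mu>, h)" by (cases x)
  have ok: "sets \<mu> = sets borel" "set_integrable \<mu> {A..B} h" "vmeas_ok A B D"
    using Cons.prems unfolding x vmeas_ok_Cons by auto
  obtain N where N: "\<And>u. \<bar>F u\<bar> \<le> N" using assms(2) unfolding bm_def by blast
  obtain M where M: "\<And>u. \<bar>G u\<bar> \<le> M" using assms(3) unfolding bm_def by blast
  have si: "set_integrable \<mu> {A..B} (\<lambda>t. F t *\<^sub>R h t)" "set_integrable \<mu> {A..B} (\<lambda>t. G t *\<^sub>R h t)"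
    using set_integrable_bdd_scaleR[OF ok(1,2), of F N] set_integrable_bdd_scaleR[OF ok(1,2), of G M]
      assms(2,3) N M unfolding bm_def by blast+
  have "set_lebesgue_integral \<mu> {A..B} (\<lambda>t. (F t + G t) *\<^sub>R h t)
      = set_lebesgue_integral \<mu> {A..B} (\<lambda>t. F t *\<^sub>R h t) + set_lebesgue_integral \<mu> {A..B} (\<lambda>t. G t *\<^sub>R h t)"
    using set_integral_add(2)[OF si] by (simp add: scaleR_add_left)
  then show ?case using Cons.IH[OF ok(3)] unfolding x vint_Cons by (simp add: algebra_simps)
qed (simp add: vint_Nil)

lemma vint_sum:
  fixes D :: "('m::finite) vmeas"
  assumes "vmeas_ok A B D" "finite K" "\<And>k. k \<in> K \<Longrightarrow> bm (F k)"
  shows "vint A B D (\<lambda>t. \<Sum>k\<in>K. F k t) = (\<Sum>k\<in>K. vint A B D (F k))"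
  using assms(2,3)
proof (induction K rule: finite_induct)
  case empty
  have "vint A B D (\<lambda>t. 0) = vint A B D (\<lambda>t. 0 * 0)" by simp
  also have "\<dots> = 0" by (simp only: vint_cmult) simp
  finally show ?case by simp
next
  case (insert x F')
  then show ?case by (simp add: vint_add[OF assms(1) _ bm_sum])
qed


definition clip :: "real \<Rightarrow> real \<Rightarrow> real \<Rightarrow> real" where "clip A B t = max A (min B t)"
definition phic0 :: "real \<Rightarrow> real \<Rightarrow> real \<Rightarrow> real \<Rightarrow> real \<Rightarrow> real" where
  "phic0 a A B t u = phi0 a (clip A B t) u"
definition phic1 :: "real \<Rightarrow> real \<Rightarrow> real \<Rightarrow> real \<Rightarrow> real" where
  "phic1 A B t u = phi1 (clip A B t) u"

lemma phic0_meas: "(\<lambda>(t,u). phic0 a A B t u) \<in> borel_measurable (borel \<Otimes>\<^sub>M borel)"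
proof -
  have "(\<lambda>x. if snd x < max A (min B (fst x)) then max A (min B (fst x)) - max (snd x) a else 0)
      \<in> borel_measurable (borel \<Otimes>\<^sub>M (borel::real measure))"
    by measurable
  then show ?thesis by (simp add: phic0_def phi0_def clip_def case_prod_beta')
qed

lemma phic1_meas: "(\<lambda>(t,u). phic1 A B t u) \<in> borel_measurable (borel \<Otimes>\<^sub>M borel)"
proof -
  have "(\<lambda>x. if snd x < max A (min B (fst x)) then 1 else 0 :: real)
      \<in> borel_measurable (borel \<Otimes>\<^sub>M (borel::real measure))"
    by measurable
  then show ?thesis by (simp add: phic1_def phi1_def clip_def case_prod_beta')
qed

lemma clip_in: "A \<le> B \<Longrightarrow> clip A B t \<in> {A..B}" by (auto simp: clip_def)
lemma clip_id: "t \<in> {A..B} \<Longrightarrow> clip A B t = t" by (auto simp: clip_def)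

lemma phic0_bound: "0 \<le> a \<Longrightarrow> a \<le> A \<Longrightarrow> A \<le> B \<Longrightarrow> \<bar>phic0 a A B t u\<bar> \<le> B"
  using phi_bound(1)[of a "clip A B t" u] clip_in[of A B t] unfolding phic0_def by auto
lemma phic1_bound: "\<bar>phic1 A B t u\<bar> \<le> 1"
  unfolding phic1_def phi1_def by auto
lemma phic0_id: "t \<in> {A..B} \<Longrightarrow> phic0 a A B t = phi0 a t"
  by (simp add: fun_eq_iff phic0_def clip_id)
lemma phic1_id: "t \<in> {A..B} \<Longrightarrow> phic1 A B t = phi1 t"
  by (simp add: fun_eq_iff phic1_def clip_id)

lemma bm_lint:
  fixes f :: "real \<Rightarrow> real"
  assumes "f \<in> borel_measurable borel" "\<And>u. \<bar>f u\<bar> \<le> K"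
  shows "\<bar>set_lebesgue_integral lborel {0..C} f\<bar> \<le> K * \<bar>C\<bar>"
proof -
  have si: "set_integrable lborel {0..C} f" using assms by (intro bdd_set_integrable) auto
  have K0: "0 \<le> K" using assms(2)[of 0] by linarith
  have hi: "(f has_integral set_lebesgue_integral lborel {0..C} f) (cbox 0 C)"
    using set_borel_integral_eq_integral[OF si] by (simp add: has_integral_integral)
  have "norm (set_lebesgue_integral lborel {0..C} f) \<le> K * measure lborel (cbox 0 C)"
    by (rule has_integral_bound[OF K0 hi]) (use assms(2) in auto)
  also have "\<dots> \<le> K * \<bar>C\<bar>" using K0 by (intro mult_left_mono) auto
  finally show ?thesis by simp
qed

lemma bm_param:
  assumes \<psi>m: "(\<lambda>(t,u). \<psi> t u) \<in> borel_measurable (borel \<Otimes>\<^sub>M borel)" and \<psi>b: "\<And>t u. \<bar>\<psi> t u\<bar> \<le> M"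
    and G: "bm G"
  shows "bm (\<lambda>t. set_lebesgue_integral lborel {0..C} (\<lambda>u. \<psi> t u * G u))"
proof -
  obtain N where N: "\<And>u. \<bar>G u\<bar> \<le> N" and Gm: "G \<in> borel_measurable borel" using G unfolding bm_def by blast
  show ?thesis
  proof (rule bmI[OF param_meas[OF \<psi>m Gm]])
    fix t
    have "\<bar>\<psi> t u * G u\<bar> \<le> M * N" for u
      unfolding abs_mult by (intro mult_mono) (use \<psi>b N in \<open>auto intro: order.trans[OF abs_ge_zero]\<close>)
    then show "\<bar>set_lebesgue_integral lborel {0..C} (\<lambda>u. \<psi> t u * G u)\<bar> \<le> M * N * \<bar>C\<bar>"
      by (intro bm_lint borel_measurable_times psi_slice(2)[OF \<psi>m] Gm)
  qed
qed

lemma bm_psi_int: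
  fixes h :: "real \<Rightarrow> real"
  assumes "sets \<mu> = sets borel" "set_integrable \<mu> {A..B} h"
    and \<psi>m: "(\<lambda>(t,u). \<psi> t u) \<in> borel_measurable (borel \<Otimes>\<^sub>M borel)" and \<psi>b: "\<And>t u. \<bar>\<psi> t u\<bar> \<le> M"
  shows "bm (\<lambda>u. set_lebesgue_integral \<mu> {A..B} (\<lambda>t. \<psi> t u * h t))"
  using s_meas[OF assms] unfolding bm_def by blast

lemma vint_psi_comp:
  fixes D :: "('m::finite) vmeas"
  assumes ok: "vmeas_ok A B D"
    and \<psi>m: "(\<lambda>(t,u). \<psi> t u) \<in> borel_measurable (borel \<Otimes>\<^sub>M borel)" and \<psi>b: "\<And>t u. \<bar>\<psi> t u\<bar> \<le> M"
  shows "vint A B D (\<lambda>t. \<psi> t u) $ i = sum_list (map (\<lambda>(\<mu>, h). set_lebesgue_integral \<mu> {A..B} (\<lambda>t. \<psi> t u * h t $ i)) D)"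
  by (rule vint_comp[OF ok bmI[OF psi_slice(1)[OF \<psi>m] \<psi>b]])

lemma vint_psi_bm:
  fixes D :: "('m::finite) vmeas"
  assumes ok: "vmeas_ok A B D"
    and \<psi>m: "(\<lambda>(t,u). \<psi> t u) \<in> borel_measurable (borel \<Otimes>\<^sub>M borel)" and \<psi>b: "\<And>t u. \<bar>\<psi> t u\<bar> \<le> M"
  shows "bm (\<lambda>u. vint A B D (\<lambda>t. \<psi> t u) $ i)"
proof -
  have "bm (\<lambda>u. sum_list (map (\<lambda>x. (\<lambda>u. case x of (\<mu>, h) \<Rightarrow> set_lebesgue_integral \<mu> {A..B} (\<lambda>t. \<psi> t u * h t $ i)) u) D))"
  proof (rule bm_sum_list)
    fix x assume "x \<in> set D"
    then obtain \<mu> h where x: "x = (\<mu>, h)" "sets \<mu> = sets borel" "set_integrable \<mu> {A..B} h"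
      using ok unfolding vmeas_ok_def by (cases x) auto
    show "bm (\<lambda>u. case x of (\<mu>, h) \<Rightarrow> set_lebesgue_integral \<mu> {A..B} (\<lambda>t. \<psi> t u * h t $ i))"
      unfolding x(1) using bm_psi_int[OF x(2) set_integrable_component[OF x(3)] \<psi>m \<psi>b] by simp
  qed
  then show ?thesis unfolding vint_psi_comp[OF ok \<psi>m \<psi>b] by (simp add: case_prod_beta')
qed

lemma vint_swap:
  fixes D :: "('m::finite) vmeas"
  assumes ok: "vmeas_ok A B D"
    and \<psi>m: "(\<lambda>(t,u). \<psi> t u) \<in> borel_measurable (borel \<Otimes>\<^sub>M borel)" and \<psi>b: "\<And>t u. \<bar>\<psi> t u\<bar> \<le> M"
    and G: "bm G"
  shows "vint A B D (\<lambda>t. set_lebesgue_integral lborel {0..C} (\<lambda>u. \<psi> t u * G u)) $ i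
       = set_lebesgue_integral lborel {0..C} (\<lambda>u. G u * vint A B D (\<lambda>t. \<psi> t u) $ i)"
proof -
  obtain N where N: "\<And>u. \<bar>G u\<bar> \<le> N" and Gm: "G \<in> borel_measurable borel" using G unfolding bm_def by blast
  have "vint A B D (\<lambda>t. set_lebesgue_integral lborel {0..C} (\<lambda>u. \<psi> t u * G u)) $ i
     = sum_list (map (\<lambda>(\<mu>, h). set_lebesgue_integral \<mu> {A..B} (\<lambda>t. set_lebesgue_integral lborel {0..C} (\<lambda>u. \<psi> t u * G u) * h t $ i)) D)"
    by (rule vint_comp[OF ok bm_param[OF \<psi>m \<psi>b G]])
  also have "\<dots> = sum_list (map (\<lambda>x. set_lebesgue_integral lborel {0..C} (\<lambda>u. (\<lambda>x u. case x of (\<mu>, h) \<Rightarrow> G u * set_lebesgue_integral \<mu> {A..B} (\<lambda>t. \<psi> t u * h t $ i)) x u)) D)"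
  proof (intro arg_cong[where f=sum_list] map_cong refl)
    fix x assume "x \<in> set D"
    then obtain \<mu> h where x: "x = (\<mu>, h)" "sets \<mu> = sets borel" "set_integrable \<mu> {A..B} h"
      using ok unfolding vmeas_ok_def by (cases x) auto
    have "set_lebesgue_integral \<mu> {A..B} (\<lambda>t. set_lebesgue_integral lborel {0..C} (\<lambda>u. \<psi> t u * G u) * h t $ i)
       = set_lebesgue_integral \<mu> {A..B} (\<lambda>t. h t $ i * set_lebesgue_integral lborel {0..C} (\<lambda>u. \<psi> t u * G u))"
      by (simp add: mult.commute)
    also have "\<dots> = set_lebesgue_integral lborel {0..C} (\<lambda>u. G u * set_lebesgue_integral \<mu> {A..B} (\<lambda>t. \<psi> t u * h t $ i))"
      by (rule s_swap[OF x(2) set_integrable_component[OF x(3)] \<psi>m \<psi>b Gm N])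
    finally show "(case x of (\<mu>, h) \<Rightarrow> set_lebesgue_integral \<mu> {A..B} (\<lambda>t. set_lebesgue_integral lborel {0..C} (\<lambda>u. \<psi> t u * G u) * h t $ i))
       = set_lebesgue_integral lborel {0..C} (\<lambda>u. (\<lambda>x u. case x of (\<mu>, h) \<Rightarrow> G u * set_lebesgue_integral \<mu> {A..B} (\<lambda>t. \<psi> t u * h t $ i)) x u)"
      unfolding x(1) by simp
  qed
  also have "\<dots> = set_lebesgue_integral lborel {0..C} (\<lambda>u. sum_list (map (\<lambda>x. (\<lambda>x u. case x of (\<mu>, h) \<Rightarrow> G u * set_lebesgue_integral \<mu> {A..B} (\<lambda>t. \<psi> t u * h t $ i)) x u) D))"
  proof (rule lint_sum_list[symmetric])
    fix x assume "x \<in> set D"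
    then obtain \<mu> h where x: "x = (\<mu>, h)" "sets \<mu> = sets borel" "set_integrable \<mu> {A..B} h"
      using ok unfolding vmeas_ok_def by (cases x) auto
    show "bm ((\<lambda>x u. case x of (\<mu>, h) \<Rightarrow> G u * set_lebesgue_integral \<mu> {A..B} (\<lambda>t. \<psi> t u * h t $ i)) x)"
      unfolding x(1) using bm_mult[OF G bm_psi_int[OF x(2) set_integrable_component[OF x(3)] \<psi>m \<psi>b]] by simp
  qed
  also have "\<dots> = set_lebesgue_integral lborel {0..C} (\<lambda>u. G u * vint A B D (\<lambda>t. \<psi> t u) $ i)"
    unfolding vint_psi_comp[OF ok \<psi>m \<psi>b] sum_list_const_mult[symmetric]
    by (simp add: case_prod_beta')
  finally show ?thesis .
qed


lemma pair_rep:
  fixes h g :: "real \<Rightarrow> real" and \<psi>1 \<psi>2 k :: "real \<Rightarrow> real \<Rightarrow> real"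
  assumes s1: "sets \<mu> = sets borel" and i1: "set_integrable \<mu> {A..B} h"
    and s2: "sets \<nu> = sets borel" and i2: "set_integrable \<nu> {A..B} g"
    and \<psi>1m: "(\<lambda>(t,u). \<psi>1 t u) \<in> borel_measurable (borel \<Otimes>\<^sub>M borel)" and \<psi>1b: "\<And>t u. \<bar>\<psi>1 t u\<bar> \<le> M1"
    and \<psi>2m: "(\<lambda>(t,u). \<psi>2 t u) \<in> borel_measurable (borel \<Otimes>\<^sub>M borel)" and \<psi>2b: "\<And>t u. \<bar>\<psi>2 t u\<bar> \<le> M2"
    and krep: "\<And>t s. t \<in> {A..B} \<Longrightarrow> s \<in> {A..B} \<Longrightarrow> k t s = set_lebesgue_integral lborel {0..C} (\<lambda>u. \<psi>1 t u * \<psi>2 s u)"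
  shows "set_lebesgue_integral \<mu> {A..B} (\<lambda>t. h t * set_lebesgue_integral \<nu> {A..B} (\<lambda>s. k t s * g s))
       = set_lebesgue_integral lborel {0..C} (\<lambda>u. set_lebesgue_integral \<mu> {A..B} (\<lambda>t. \<psi>1 t u * h t)
                                               * set_lebesgue_integral \<nu> {A..B} (\<lambda>s. \<psi>2 s u * g s))"
proof -
  define e where "e (u::real) = set_lebesgue_integral \<nu> {A..B} (\<lambda>s. \<psi>2 s u * g s)" for u
  have ebm: "bm e" unfolding e_def[abs_def] by (rule bm_psi_int[OF s2 i2 \<psi>2m \<psi>2b])
  obtain N where N: "\<And>u. \<bar>e u\<bar> \<le> N" and em: "e \<in> borel_measurable borel" using ebm unfolding bm_def by blast
  have inner: "set_lebesgue_integral \<nu> {A..B} (\<lambda>s. k t s * g s) = set_lebesgue_integral lborel {0..C} (\<lambda>u. \<psi>1 t u * e u)"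
    if t: "t \<in> {A..B}" for t
  proof -
    have "set_lebesgue_integral \<nu> {A..B} (\<lambda>s. k t s * g s)
        = set_lebesgue_integral \<nu> {A..B} (\<lambda>s. g s * set_lebesgue_integral lborel {0..C} (\<lambda>u. \<psi>2 s u * \<psi>1 t u))"
      using t s2 by (intro set_lebesgue_integral_cong) (auto simp: krep mult.commute)
    also have "\<dots> = set_lebesgue_integral lborel {0..C} (\<lambda>u. \<psi>1 t u * e u)"
      unfolding e_def by (rule s_swap[OF s2 i2 \<psi>2m \<psi>2b psi_slice(2)[OF \<psi>1m] \<psi>1b])
    finally show ?thesis .
  qed
  have "set_lebesgue_integral \<mu> {A..B} (\<lambda>t. h t * set_lebesgue_integral \<nu> {A..B} (\<lambda>s. k t s * g s))
      = set_lebesgue_integral \<mu> {A..B} (\<lambda>t. h t * set_lebesgue_integral lborel {0..C} (\<lambda>u. \<psi>1 t u * e u))"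
    using s1 by (intro set_lebesgue_integral_cong) (auto simp: inner)
  also have "\<dots> = set_lebesgue_integral lborel {0..C} (\<lambda>u. e u * set_lebesgue_integral \<mu> {A..B} (\<lambda>t. \<psi>1 t u * h t))"
    by (rule s_swap[OF s1 i1 \<psi>1m \<psi>1b em N])
  finally show ?thesis by (simp add: e_def mult.commute)
qed

lemma ccov_rep:
  fixes D E :: "('m::finite) vmeas" and \<psi>1 \<psi>2 k :: "real \<Rightarrow> real \<Rightarrow> real"
  assumes okD: "vmeas_ok A B D" and okE: "vmeas_ok A B E"
    and \<psi>1m: "(\<lambda>(t,u). \<psi>1 t u) \<in> borel_measurable (borel \<Otimes>\<^sub>M borel)" and \<psi>1b: "\<And>t u. \<bar>\<psi>1 t u\<bar> \<le> M1"
    and \<psi>2m: "(\<lambda>(t,u). \<psi>2 t u) \<in> borel_measurable (borel \<Otimes>\<^sub>M borel)" and \<psi>2b: "\<And>t u. \<bar>\<psi>2 t u\<bar> \<le> M2"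
    and krep: "\<And>t s. t \<in> {A..B} \<Longrightarrow> s \<in> {A..B} \<Longrightarrow> k t s = set_lebesgue_integral lborel {0..C} (\<lambda>u. \<psi>1 t u * \<psi>2 s u)"
  shows "ccov A B k D E $ i $ j = set_lebesgue_integral lborel {0..C}
           (\<lambda>u. vint A B D (\<lambda>t. \<psi>1 t u) $ i * vint A B E (\<lambda>s. \<psi>2 s u) $ j)"
proof -
  define d where "d x (u::real) = (case x of (\<mu>, h) \<Rightarrow> set_lebesgue_integral \<mu> {A..B} (\<lambda>t. \<psi>1 t u * h t $ i))" for x u
  define e where "e y (u::real) = (case y of (\<nu>, g) \<Rightarrow> set_lebesgue_integral \<nu> {A..B} (\<lambda>s. \<psi>2 s u * g s $ j))" for y u
  have dbm: "bm (d x)" if xD: "x \<in> set D" for x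
  proof -
    obtain \<mu> h where x: "x = (\<mu>, h)" "sets \<mu> = sets borel" "set_integrable \<mu> {A..B} h"
      using okD xD unfolding vmeas_ok_def by (cases x) auto
    show ?thesis unfolding x(1) d_def using bm_psi_int[OF x(2) set_integrable_component[OF x(3)] \<psi>1m \<psi>1b] by simp
  qed
  have ebm: "bm (e y)" if yE: "y \<in> set E" for y
  proof -
    obtain \<nu> g where y: "y = (\<nu>, g)" "sets \<nu> = sets borel" "set_integrable \<nu> {A..B} g"
      using okE yE unfolding vmeas_ok_def by (cases y) auto
    show ?thesis unfolding y(1) e_def using bm_psi_int[OF y(2) set_integrable_component[OF y(3)] \<psi>2m \<psi>2b] by simp
  qed
  have "ccov A B k D E $ i $ j = sum_list (map (\<lambda>x. sum_list (map (\<lambda>y.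
          set_lebesgue_integral lborel {0..C} (\<lambda>u. d x u * e y u)) E)) D)"
    unfolding ccov_def vec_lambda_beta
  proof (intro arg_cong[where f=sum_list] map_cong refl)
    fix x assume xD: "x \<in> set D"
    obtain \<mu> h where x: "x = (\<mu>, h)" "sets \<mu> = sets borel" "set_integrable \<mu> {A..B} h"
      using okD xD unfolding vmeas_ok_def by (cases x) auto
    have inner: "(case y of (\<nu>, g) \<Rightarrow> set_lebesgue_integral \<mu> {A..B} (\<lambda>t. h t $ i * set_lebesgue_integral \<nu> {A..B} (\<lambda>s. k t s * g s $ j)))
        = set_lebesgue_integral lborel {0..C} (\<lambda>u. d x u * e y u)" if yE: "y \<in> set E" for y
    proof -
      obtain \<nu> g where y: "y = (\<nu>, g)" "sets \<nu> = sets borel" "set_integrable \<nu> {A..B} g"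
        using okE yE unfolding vmeas_ok_def by (cases y) auto
      show ?thesis
        unfolding x(1) y(1) d_def e_def
        using pair_rep[OF x(2) set_integrable_component[OF x(3)] y(2) set_integrable_component[OF y(3)] \<psi>1m \<psi>1b \<psi>2m \<psi>2b krep]
        by simp
    qed
    show "(case x of (\<mu>, h) \<Rightarrow> sum_list (map (\<lambda>(\<nu>, g). set_lebesgue_integral \<mu> {A..B} (\<lambda>t. h t $ i * set_lebesgue_integral \<nu> {A..B} (\<lambda>s. k t s * g s $ j))) E))
        = sum_list (map (\<lambda>y. set_lebesgue_integral lborel {0..C} (\<lambda>u. d x u * e y u)) E)"
      unfolding x(1) using inner[unfolded x(1)] by (auto intro!: arg_cong[where f=sum_list] map_cong)
  qed
  also have "\<dots> = sum_list (map (\<lambda>x. set_lebesgue_integral lborel {0..C} (\<lambda>u. sum_list (map (\<lambda>y. d x u * e y u) E))) D)"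
    by (intro arg_cong[where f=sum_list] map_cong refl lint_sum_list[symmetric] bm_mult dbm ebm) auto
  also have "\<dots> = set_lebesgue_integral lborel {0..C} (\<lambda>u. sum_list (map (\<lambda>x. sum_list (map (\<lambda>y. d x u * e y u) E)) D))"
    by (rule lint_sum_list[symmetric]) (intro bm_sum_list bm_mult dbm ebm; simp)
  also have "\<dots> = set_lebesgue_integral lborel {0..C}
           (\<lambda>u. vint A B D (\<lambda>t. \<psi>1 t u) $ i * vint A B E (\<lambda>s. \<psi>2 s u) $ j)"
  proof -
    have "vint A B D (\<lambda>t. \<psi>1 t u) $ i = sum_list (map (\<lambda>x. d x u) D)" for u
      unfolding vint_psi_comp[OF okD \<psi>1m \<psi>1b] d_def by (simp add: case_prod_beta')
    moreover have "vint A B E (\<lambda>s. \<psi>2 s u) $ j = sum_list (map (\<lambda>y. e y u) E)" for u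
      unfolding vint_psi_comp[OF okE \<psi>2m \<psi>2b] e_def by (simp add: case_prod_beta')
    moreover have "sum_list (map (\<lambda>x. d x u) D) * sum_list (map (\<lambda>y. e y u) E)
        = sum_list (map (\<lambda>x. sum_list (map (\<lambda>y. d x u * e y u) E)) D)" for u
    proof -
      have "sum_list (map (\<lambda>x. d x u) D) * sum_list (map (\<lambda>y. e y u) E)
          = sum_list (map (\<lambda>x. d x u * sum_list (map (\<lambda>y. e y u) E)) D)"
        by (rule sum_list_mult_const[symmetric])
      also have "\<dots> = sum_list (map (\<lambda>x. sum_list (map (\<lambda>y. d x u * e y u) E)) D)"
        by (simp add: sum_list_const_mult)
      finally show ?thesis .
    qed
    ultimately show ?thesis by simp
  qed
  finally show ?thesis .
qed


definition Psi :: "real \<Rightarrow> real \<Rightarrow> real \<Rightarrow> ('m::finite) vmeas \<Rightarrow> 'm vmeas \<Rightarrow> real \<Rightarrow> real^'m" where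
  "Psi a A B D0 D1 u = vint A B D0 (\<lambda>t. phic0 a A B t u) + vint A B D1 (\<lambda>t. phic1 A B t u)"

context
  fixes a A B :: real
  assumes a0: "0 \<le> a" and aA: "a < A" and AB: "A < B"
begin

lemma krep00: "t \<in> {A..B} \<Longrightarrow> s \<in> {A..B} \<Longrightarrow> K_ibm a t s = set_lebesgue_integral lborel {0..B} (\<lambda>u. phic0 a A B t u * phic0 a A B s u)"
  using K_rep00[OF a0 aA] by (simp add: phic0_id)
lemma krep01: "t \<in> {A..B} \<Longrightarrow> s \<in> {A..B} \<Longrightarrow> K_01 a t s = set_lebesgue_integral lborel {0..B} (\<lambda>u. phic0 a A B t u * phic1 A B s u)"
  using K_rep01[OF a0 aA] by (simp add: phic0_id phic1_id)
lemma krep10: "t \<in> {A..B} \<Longrightarrow> s \<in> {A..B} \<Longrightarrow> K_10 a t s = set_lebesgue_integral lborel {0..B} (\<lambda>u. phic1 A B t u * phic0 a A B s u)"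
  using K_rep10[OF a0 aA] by (simp add: phic0_id phic1_id)
lemma krep11: "t \<in> {A..B} \<Longrightarrow> s \<in> {A..B} \<Longrightarrow> K_11 a t s = set_lebesgue_integral lborel {0..B} (\<lambda>u. phic1 A B t u * phic1 A B s u)"
  using K_rep11[OF a0 aA] by (simp add: phic1_id)

lemma pc0b: "\<bar>phic0 a A B t u\<bar> \<le> B" using phic0_bound[of a A B] a0 aA AB by auto
lemma pc1b: "\<bar>phic1 A B t u\<bar> \<le> 1" by (rule phic1_bound)

lemma bm0: "vmeas_ok A B D \<Longrightarrow> bm (\<lambda>u. vint A B D (\<lambda>t. phic0 a A B t u) $ i)"
  by (rule vint_psi_bm[OF _ phic0_meas pc0b])
lemma bm1: "vmeas_ok A B D \<Longrightarrow> bm (\<lambda>u. vint A B D (\<lambda>t. phic1 A B t u) $ i)"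
  by (rule vint_psi_bm[OF _ phic1_meas pc1b])

lemma bm_Psi: "vmeas_ok A B D0 \<Longrightarrow> vmeas_ok A B D1 \<Longrightarrow> bm (\<lambda>u. Psi a A B D0 D1 u $ i)"
  unfolding Psi_def vector_add_component by (intro bm_add bm0 bm1)

lemma est_rep:
  fixes D0 D1 E0 E1 :: "('m::finite) vmeas"
  assumes "vmeas_ok A B D0" "vmeas_ok A B D1" "vmeas_ok A B E0" "vmeas_ok A B E1"
  shows "(ccov A B (K_ibm a) D0 E0 + ccov A B (K_01 a) D0 E1 + ccov A B (K_10 a) D1 E0 + ccov A B (K_11 a) D1 E1) $ i $ j
     = set_lebesgue_integral lborel {0..B} (\<lambda>u. Psi a A B D0 D1 u $ i * Psi a A B E0 E1 u $ j)"
proof -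
  define p0 where "p0 u = vint A B D0 (\<lambda>t. phic0 a A B t u) $ i" for u
  define p1 where "p1 u = vint A B D1 (\<lambda>t. phic1 A B t u) $ i" for u
  define q0 where "q0 u = vint A B E0 (\<lambda>t. phic0 a A B t u) $ j" for u
  define q1 where "q1 u = vint A B E1 (\<lambda>t. phic1 A B t u) $ j" for u
  have b: "bm p0" "bm p1" "bm q0" "bm q1" unfolding p0_def p1_def q0_def q1_def using assms by (auto intro: bm0 bm1)
  have c00: "ccov A B (K_ibm a) D0 E0 $ i $ j = set_lebesgue_integral lborel {0..B} (\<lambda>u. p0 u * q0 u)"
    unfolding p0_def q0_def by (rule ccov_rep[OF assms(1,3) phic0_meas pc0b phic0_meas pc0b krep00])
  have c01: "ccov A B (K_01 a) D0 E1 $ i $ j = set_lebesgue_integral lborel {0..B} (\<lambda>u. p0 u * q1 u)"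
    unfolding p0_def q1_def by (rule ccov_rep[OF assms(1,4) phic0_meas pc0b phic1_meas pc1b krep01])
  have c10: "ccov A B (K_10 a) D1 E0 $ i $ j = set_lebesgue_integral lborel {0..B} (\<lambda>u. p1 u * q0 u)"
    unfolding p1_def q0_def by (rule ccov_rep[OF assms(2,3) phic1_meas pc1b phic0_meas pc0b krep10])
  have c11: "ccov A B (K_11 a) D1 E1 $ i $ j = set_lebesgue_integral lborel {0..B} (\<lambda>u. p1 u * q1 u)"
    unfolding p1_def q1_def by (rule ccov_rep[OF assms(2,4) phic1_meas pc1b phic1_meas pc1b krep11])
  have "set_lebesgue_integral lborel {0..B} (\<lambda>u. Psi a A B D0 D1 u $ i * Psi a A B E0 E1 u $ j)
      = set_lebesgue_integral lborel {0..B} (\<lambda>u. ((p0 u * q0 u + p0 u * q1 u) + p1 u * q0 u) + p1 u * q1 u)"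
    unfolding Psi_def p0_def p1_def q0_def q1_def by (simp add: algebra_simps)
  also have "\<dots> = set_lebesgue_integral lborel {0..B} (\<lambda>u. p0 u * q0 u) + set_lebesgue_integral lborel {0..B} (\<lambda>u. p0 u * q1 u)
      + set_lebesgue_integral lborel {0..B} (\<lambda>u. p1 u * q0 u) + set_lebesgue_integral lborel {0..B} (\<lambda>u. p1 u * q1 u)"
    using b by (simp add: lint_add bm_add bm_mult)
  finally show ?thesis using c00 c01 c10 c11 by simp
qed

end


lemma set_integrable_return_const:
  fixes c :: "real^'m::finite" and x A B :: real
  shows "set_integrable (return borel x) {A..B} (\<lambda>_. c)"
proof -
  interpret P: prob_space "return borel x" by (rule prob_space_return) simp
  show ?thesis unfolding set_integrable_def
  proof (rule P.integrable_const_bound[where B="norm c"])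
    show "AE y in return borel x. norm (indicator {A..B} y *\<^sub>R c) \<le> norm c"
      by (intro AE_I2) (auto simp: indicator_def)
    show "(\<lambda>y. indicator {A..B} y *\<^sub>R c) \<in> borel_measurable (return borel x)"
      unfolding measurable_cong_sets[OF sets_return refl] by (intro borel_measurable_scaleR borel_measurable_indicator) auto
  qed
qed

lemma vmeas_ok_zeta0:
  fixes fd :: "nat \<Rightarrow> real \<Rightarrow> real^'m::finite"
  assumes "set_integrable lborel {A..B} (fd 4)"
  shows "vmeas_ok A B (zeta0 a A B fd)"
  using assms unfolding zeta0_def vmeas_ok_def by (auto simp: set_integrable_return_const sets_return)

lemma vmeas_ok_zeta1:
  fixes fd :: "nat \<Rightarrow> real \<Rightarrow> real^'m::finite"
  shows "vmeas_ok A B (zeta1 a A B fd)"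
  unfolding zeta1_def vmeas_ok_def by (auto simp: set_integrable_return_const sets_return)

lemma vmeas_ok_mat:
  fixes D :: "('m::finite) vmeas"
  assumes "vmeas_ok A B D"
  shows "vmeas_ok A B (mat_vmeas M D)"
  using assms
proof (induction D)
  case (Cons x D)
  obtain \<mu> h where x: "x = (\<mu>, h)" by (cases x)
  have okx: "sets \<mu> = sets borel" "set_integrable \<mu> {A..B} h" "vmeas_ok A B D"
    using Cons.prems unfolding x vmeas_ok_Cons by auto
  have "integrable \<mu> (\<lambda>t. M *v (indicator {A..B} t *\<^sub>R h t))"
    using okx(2) unfolding set_integrable_def by (rule integrable_bounded_linear[OF matrix_vector_mul_bounded_linear])
  then have "set_integrable \<mu> {A..B} (\<lambda>t. M *v h t)"
    unfolding set_integrable_def by (simp add: matrix_vector_mult_scaleR)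
  then show ?case using Cons.IH[OF okx(3)] okx unfolding x mat_vmeas_def by (simp add: vmeas_ok_Cons[unfolded mat_vmeas_def])
qed (simp add: mat_vmeas_def vmeas_ok_Nil)

lemma vint_mat:
  fixes D :: "('m::finite) vmeas"
  assumes ok: "vmeas_ok A B D" and F: "bm F"
  shows "vint A B (mat_vmeas M D) F = M *v vint A B D F"
  using ok
proof (induction D)
  case Nil then show ?case by (simp add: vint_Nil mat_vmeas_def)
next
  case (Cons x D)
  obtain \<mu> h where x: "x = (\<mu>, h)" by (cases x)
  have okx: "sets \<mu> = sets borel" "set_integrable \<mu> {A..B} h" "vmeas_ok A B D"
    using Cons.prems unfolding x vmeas_ok_Cons by auto
  obtain N where N: "\<And>u. \<bar>F u\<bar> \<le> N" and Fm: "F \<in> borel_measurable borel" using F unfolding bm_def by blast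
  have si: "set_integrable \<mu> {A..B} (\<lambda>t. F t *\<^sub>R h t)"
    using set_integrable_bdd_scaleR[OF okx(1,2) Fm] N by blast
  have "set_lebesgue_integral \<mu> {A..B} (\<lambda>t. F t *\<^sub>R (M *v h t)) = (LINT t|\<mu>. M *v (indicator {A..B} t *\<^sub>R (F t *\<^sub>R h t)))"
    unfolding set_lebesgue_integral_def by (simp add: matrix_vector_mult_scaleR)
  also have "\<dots> = M *v set_lebesgue_integral \<mu> {A..B} (\<lambda>t. F t *\<^sub>R h t)"
    unfolding set_lebesgue_integral_def
    by (rule integral_bounded_linear[OF matrix_vector_mul_bounded_linear si[unfolded set_integrable_def]])
  finally have "set_lebesgue_integral \<mu> {A..B} (\<lambda>t. F t *\<^sub>R (M *v h t)) = M *v set_lebesgue_integral \<mu> {A..B} (\<lambda>t. F t *\<^sub>R h t)" .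
  then show ?case using Cons.IH[OF okx(3)]
    by (simp add: x mat_vmeas_def vint_Cons[unfolded mat_vmeas_def] matrix_vector_right_distrib)
qed


context
  fixes a A B :: real and fd :: "nat \<Rightarrow> real \<Rightarrow> real^'m::finite"
  assumes a0: "0 \<le> a" and aA: "a < A" and AB: "A < B"
    and D: "\<forall>k<4. \<forall>t\<in>{A..B}. (fd k has_vector_derivative fd (Suc k) t) (at t within {A..B})"
    and int4: "set_integrable lborel {A..B} (fd 4)"
begin

lemma fd_cont: "n < 4 \<Longrightarrow> continuous_on {A..B} (fd n)"
  unfolding continuous_on_eq_continuous_within using D has_vector_derivative_continuous by blast

lemma cut_bm:
  assumes "n < 4"
  shows "bm (\<lambda>t. indicator {A..B} t * fd n t $ k)"
proof -
  have c: "continuous_on {A..B} (\<lambda>t. fd n t $ k)" using fd_cont[OF assms] by (intro continuous_intros)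
  obtain N where N: "\<And>s. s \<in> {A..B} \<Longrightarrow> \<bar>fd n s $ k\<bar> \<le> N" using bounded_on_Icc[OF c] by blast
  have N0: "0 \<le> N" using N[of A] AB by auto
  show ?thesis
  proof (rule bmI)
    show "(\<lambda>t. indicator {A..B} t * fd n t $ k) \<in> borel_measurable borel"
      using borel_measurable_continuous_on_indicator[OF _ c] by simp
    show "\<bar>indicator {A..B} t * fd n t $ k\<bar> \<le> N" for t using N N0 by (auto simp: indicator_def)
  qed
qed

lemma lincomb:
  assumes "n < 4" "vmeas_ok A B D"
  shows "vint A B D (\<lambda>t. \<theta> \<bullet> fd n t) = (\<Sum>k\<in>UNIV. \<theta> $ k *\<^sub>R vint A B D (\<lambda>t. fd n t $ k))"
proof -
  have "vint A B D (\<lambda>t. \<theta> \<bullet> fd n t) = vint A B D (\<lambda>t. \<Sum>k\<in>UNIV. \<theta> $ k * (indicator {A..B} t * fd n t $ k))"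
    by (rule vint_cong[OF assms(2)]) (simp add: inner_vec_def)
  also have "\<dots> = (\<Sum>k\<in>UNIV. vint A B D (\<lambda>t. \<theta> $ k * (indicator {A..B} t * fd n t $ k)))"
    by (rule vint_sum[OF assms(2)]) (auto intro: bm_cmult cut_bm[OF assms(1)])
  also have "\<dots> = (\<Sum>k\<in>UNIV. \<theta> $ k *\<^sub>R vint A B D (\<lambda>t. indicator {A..B} t * fd n t $ k))"
    by (simp add: vint_cmult)
  also have "\<dots> = (\<Sum>k\<in>UNIV. \<theta> $ k *\<^sub>R vint A B D (\<lambda>t. fd n t $ k))"
    by (intro sum.cong refl arg_cong[where f="\<lambda>x. _ *\<^sub>R x"] vint_cong[OF assms(2)]) simp
  finally show ?thesis .
qed

abbreviation "Z0 \<equiv> zeta0 a A B fd"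
abbreviation "Z1 \<equiv> zeta1 a A B fd"

lemma okZ0: "vmeas_ok A B Z0" by (rule vmeas_ok_zeta0[where fd=fd, OF int4])
lemma okZ1: "vmeas_ok A B Z1" by (rule vmeas_ok_zeta1)

lemma bm_phic0_t: "bm (\<lambda>u. phic0 a A B t u)"
  by (rule bmI[OF psi_slice(2)[OF phic0_meas] pc0b[OF a0 aA AB]])
lemma bm_phic1_t: "bm (\<lambda>u. phic1 A B t u)"
  by (rule bmI[OF psi_slice(2)[OF phic1_meas] phic1_bound])

lemma ID0:
  assumes t: "t \<in> {A..B}"
  shows "set_lebesgue_integral lborel {0..B} (\<lambda>u. phic0 a A B t u * Psi a A B Z0 Z1 u $ k) = fd 0 t $ k"
proof -
  have e0: "set_lebesgue_integral lborel {0..B} (\<lambda>u. phic0 a A B t u * vint A B Z0 (\<lambda>s. phic0 a A B s u) $ k)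
      = vint A B Z0 (K_ibm a t) $ k"
  proof -
    have "set_lebesgue_integral lborel {0..B} (\<lambda>u. phic0 a A B t u * vint A B Z0 (\<lambda>s. phic0 a A B s u) $ k)
       = vint A B Z0 (\<lambda>s. set_lebesgue_integral lborel {0..B} (\<lambda>u. phic0 a A B s u * phic0 a A B t u)) $ k"
      by (rule vint_swap[OF okZ0 phic0_meas pc0b[OF a0 aA AB] bm_phic0_t, symmetric])
    also have "\<dots> = vint A B Z0 (K_ibm a t) $ k"
      using t by (intro arg_cong[where f="\<lambda>x. x $ k"] vint_cong[OF okZ0])
        (simp add: krep00[OF a0 aA AB, symmetric] K_ibm_sym)
    finally show ?thesis .
  qed
  have e1: "set_lebesgue_integral lborel {0..B} (\<lambda>u. phic0 a A B t u * vint A B Z1 (\<lambda>s. phic1 A B s u) $ k)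
      = vint A B Z1 (K_01 a t) $ k"
  proof -
    have "set_lebesgue_integral lborel {0..B} (\<lambda>u. phic0 a A B t u * vint A B Z1 (\<lambda>s. phic1 A B s u) $ k)
       = vint A B Z1 (\<lambda>s. set_lebesgue_integral lborel {0..B} (\<lambda>u. phic1 A B s u * phic0 a A B t u)) $ k"
      by (rule vint_swap[OF okZ1 phic1_meas phic1_bound bm_phic0_t, symmetric])
    also have "\<dots> = vint A B Z1 (K_01 a t) $ k"
      using t by (intro arg_cong[where f="\<lambda>x. x $ k"] vint_cong[OF okZ1])
        (simp add: krep10[OF a0 aA AB, symmetric] K_10_closed K_01_closed)
    finally show ?thesis .
  qed
  have "set_lebesgue_integral lborel {0..B} (\<lambda>u. phic0 a A B t u * Psi a A B Z0 Z1 u $ k)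
     = set_lebesgue_integral lborel {0..B} (\<lambda>u. phic0 a A B t u * vint A B Z0 (\<lambda>s. phic0 a A B s u) $ k
          + phic0 a A B t u * vint A B Z1 (\<lambda>s. phic1 A B s u) $ k)"
    unfolding Psi_def by (simp add: algebra_simps)
  also have "\<dots> = vint A B Z0 (K_ibm a t) $ k + vint A B Z1 (K_01 a t) $ k"
    unfolding e0[symmetric] e1[symmetric]
    by (intro lint_add bm_mult bm_phic0_t bm0[OF a0 aA AB okZ0] bm1[OF a0 aA AB okZ1])
  also have "\<dots> = fd 0 t $ k"
    using green0[OF a0 aA AB D int4 t] by (metis vector_add_component)
  finally show ?thesis .
qed

lemma ID1:
  assumes t: "t \<in> {A..B}"
  shows "set_lebesgue_integral lborel {0..B} (\<lambda>u. phic1 A B t u * Psi a A B Z0 Z1 u $ k) = fd 1 t $ k"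
proof -
  have e0: "set_lebesgue_integral lborel {0..B} (\<lambda>u. phic1 A B t u * vint A B Z0 (\<lambda>s. phic0 a A B s u) $ k)
      = vint A B Z0 (K_10 a t) $ k"
  proof -
    have "set_lebesgue_integral lborel {0..B} (\<lambda>u. phic1 A B t u * vint A B Z0 (\<lambda>s. phic0 a A B s u) $ k)
       = vint A B Z0 (\<lambda>s. set_lebesgue_integral lborel {0..B} (\<lambda>u. phic0 a A B s u * phic1 A B t u)) $ k"
      by (rule vint_swap[OF okZ0 phic0_meas pc0b[OF a0 aA AB] bm_phic1_t, symmetric])
    also have "\<dots> = vint A B Z0 (K_10 a t) $ k"
      using t by (intro arg_cong[where f="\<lambda>x. x $ k"] vint_cong[OF okZ0])
        (simp add: krep01[OF a0 aA AB, symmetric] K_10_closed K_01_closed)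
    finally show ?thesis .
  qed
  have e1: "set_lebesgue_integral lborel {0..B} (\<lambda>u. phic1 A B t u * vint A B Z1 (\<lambda>s. phic1 A B s u) $ k)
      = vint A B Z1 (K_11 a t) $ k"
  proof -
    have "set_lebesgue_integral lborel {0..B} (\<lambda>u. phic1 A B t u * vint A B Z1 (\<lambda>s. phic1 A B s u) $ k)
       = vint A B Z1 (\<lambda>s. set_lebesgue_integral lborel {0..B} (\<lambda>u. phic1 A B s u * phic1 A B t u)) $ k"
      by (rule vint_swap[OF okZ1 phic1_meas phic1_bound bm_phic1_t, symmetric])
    also have "\<dots> = vint A B Z1 (K_11 a t) $ k"
      using t by (intro arg_cong[where f="\<lambda>x. x $ k"] vint_cong[OF okZ1])
        (simp add: krep11[OF a0 aA AB, symmetric] K_11_closed min.commute)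
    finally show ?thesis .
  qed
  have "set_lebesgue_integral lborel {0..B} (\<lambda>u. phic1 A B t u * Psi a A B Z0 Z1 u $ k)
     = set_lebesgue_integral lborel {0..B} (\<lambda>u. phic1 A B t u * vint A B Z0 (\<lambda>s. phic0 a A B s u) $ k
          + phic1 A B t u * vint A B Z1 (\<lambda>s. phic1 A B s u) $ k)"
    unfolding Psi_def by (simp add: algebra_simps)
  also have "\<dots> = vint A B Z0 (K_10 a t) $ k + vint A B Z1 (K_11 a t) $ k"
    unfolding e0[symmetric] e1[symmetric]
    by (intro lint_add bm_mult bm_phic1_t bm0[OF a0 aA AB okZ0] bm1[OF a0 aA AB okZ1])
  also have "\<dots> = fd 1 t $ k"
    using green1[OF a0 aA AB D int4 t] by (metis vector_add_component)
  finally show ?thesis .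
qed

end


lemma matrix_inv_left:
  fixes C :: "real^'m::finite^'m"
  assumes "invertible C"
  shows "matrix_inv C ** C = mat 1"
proof -
  have "\<exists>A'. C ** A' = mat 1 \<and> A' ** C = mat 1" using assms unfolding invertible_def by blast
  from someI_ex[OF this] show ?thesis unfolding matrix_inv_def by blast
qed

context
  fixes a A B :: real and fd :: "nat \<Rightarrow> real \<Rightarrow> real^'m::finite"
  assumes a0: "0 \<le> a" and aA: "a < A" and AB: "A < B"
    and D: "\<forall>k<4. \<forall>t\<in>{A..B}. (fd k has_vector_derivative fd (Suc k) t) (at t within {A..B})"
    and int4: "set_integrable lborel {A..B} (fd 4)"
begin

lemma cross:
  fixes G0 G1 :: "('m::finite) vmeas"
  assumes ok0: "vmeas_ok A B G0" and ok1: "vmeas_ok A B G1"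
  shows "set_lebesgue_integral lborel {0..B} (\<lambda>u. Psi a A B G0 G1 u $ i * Psi a A B (zeta0 a A B fd) (zeta1 a A B fd) u $ k)
       = vint A B G0 (\<lambda>t. fd 0 t $ k) $ i + vint A B G1 (\<lambda>t. fd 1 t $ k) $ i"
proof -
  note okZ0 = okZ0[OF a0 aA AB D int4] and okZ1 = okZ1[OF a0 aA AB D int4]
  define z where "z u = Psi a A B (zeta0 a A B fd) (zeta1 a A B fd) u $ k" for u
  have zb: "bm z" unfolding z_def[abs_def] by (rule bm_Psi[OF a0 aA AB okZ0 okZ1])
  have e0: "set_lebesgue_integral lborel {0..B} (\<lambda>u. z u * vint A B G0 (\<lambda>t. phic0 a A B t u) $ i)
      = vint A B G0 (\<lambda>t. fd 0 t $ k) $ i"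
  proof -
    have "set_lebesgue_integral lborel {0..B} (\<lambda>u. z u * vint A B G0 (\<lambda>t. phic0 a A B t u) $ i)
       = vint A B G0 (\<lambda>t. set_lebesgue_integral lborel {0..B} (\<lambda>u. phic0 a A B t u * z u)) $ i"
      by (rule vint_swap[OF ok0 phic0_meas pc0b[OF a0 aA AB] zb, symmetric])
    also have "\<dots> = vint A B G0 (\<lambda>t. fd 0 t $ k) $ i"
      by (intro arg_cong[where f="\<lambda>x. x $ i"] vint_cong[OF ok0])
        (simp add: z_def ID0[OF a0 aA AB D int4])
    finally show ?thesis .
  qed
  have e1: "set_lebesgue_integral lborel {0..B} (\<lambda>u. z u * vint A B G1 (\<lambda>t. phic1 A B t u) $ i)
      = vint A B G1 (\<lambda>t. fd 1 t $ k) $ i"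
  proof -
    have "set_lebesgue_integral lborel {0..B} (\<lambda>u. z u * vint A B G1 (\<lambda>t. phic1 A B t u) $ i)
       = vint A B G1 (\<lambda>t. set_lebesgue_integral lborel {0..B} (\<lambda>u. phic1 A B t u * z u)) $ i"
      by (rule vint_swap[OF ok1 phic1_meas phic1_bound zb, symmetric])
    also have "\<dots> = vint A B G1 (\<lambda>t. fd 1 t $ k) $ i"
      by (intro arg_cong[where f="\<lambda>x. x $ i"] vint_cong[OF ok1])
        (simp add: z_def ID1[OF a0 aA AB D int4])
    finally show ?thesis .
  qed
  have "set_lebesgue_integral lborel {0..B} (\<lambda>u. Psi a A B G0 G1 u $ i * z u)
     = set_lebesgue_integral lborel {0..B} (\<lambda>u. z u * vint A B G0 (\<lambda>t. phic0 a A B t u) $ i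
          + z u * vint A B G1 (\<lambda>t. phic1 A B t u) $ i)"
    unfolding Psi_def by (simp add: algebra_simps)
  also have "\<dots> = vint A B G0 (\<lambda>t. fd 0 t $ k) $ i + vint A B G1 (\<lambda>t. fd 1 t $ k) $ i"
    unfolding e0[symmetric] e1[symmetric]
    by (intro lint_add bm_mult zb bm0[OF a0 aA AB ok0] bm1[OF a0 aA AB ok1])
  finally show ?thesis by (simp add: z_def)
qed

definition CC where "CC = vouter A B (fd 0) (zeta0 a A B fd) + vouter A B (fd 1) (zeta1 a A B fd)"

lemma CC_row: "CC $ k = vint A B (zeta0 a A B fd) (\<lambda>t. fd 0 t $ k) + vint A B (zeta1 a A B fd) (\<lambda>t. fd 1 t $ k)"
  by (simp add: CC_def vouter_def)

lemma CC_entry: "CC $ k $ j = set_lebesgue_integral lborel {0..B}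
      (\<lambda>u. Psi a A B (zeta0 a A B fd) (zeta1 a A B fd) u $ j * Psi a A B (zeta0 a A B fd) (zeta1 a A B fd) u $ k)"
  unfolding CC_row vector_add_component
  by (rule cross[OF okZ0[OF a0 aA AB D int4] okZ1[OF a0 aA AB D int4], symmetric])

lemma CC_sym: "CC $ k $ j = CC $ j $ k"
  unfolding CC_entry by (simp add: mult.commute)

end


context
  fixes a A B :: real and fd :: "nat \<Rightarrow> real \<Rightarrow> real^'m::finite"
  assumes a0: "0 \<le> a" and aA: "a < A" and AB: "A < B"
    and D: "\<forall>k<4. \<forall>t\<in>{A..B}. (fd k has_vector_derivative fd (Suc k) t) (at t within {A..B})"
    and int4: "set_integrable lborel {A..B} (fd 4)"
begin

lemma Psi_mat:
  fixes D0 D1 :: "('m::finite) vmeas"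
  assumes "vmeas_ok A B D0" "vmeas_ok A B D1"
  shows "Psi a A B (mat_vmeas M D0) (mat_vmeas M D1) u = M *v Psi a A B D0 D1 u"
proof -
  have b0: "bm (\<lambda>t. phic0 a A B t u)" by (rule bmI[OF psi_slice(1)[OF phic0_meas] pc0b[OF a0 aA AB]])
  have b1: "bm (\<lambda>t. phic1 A B t u)" by (rule bmI[OF psi_slice(1)[OF phic1_meas] phic1_bound])
  show ?thesis unfolding Psi_def vint_mat[OF assms(1) b0] vint_mat[OF assms(2) b1]
    by (simp add: matrix_vector_right_distrib)
qed

lemma vint_mat_f:
  fixes D :: "('m::finite) vmeas"
  assumes "n < 4" "vmeas_ok A B D"
  shows "vint A B (mat_vmeas M D) (\<lambda>t. fd n t $ k) = M *v vint A B D (\<lambda>t. fd n t $ k)"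
proof -
  have "vint A B (mat_vmeas M D) (\<lambda>t. fd n t $ k) = vint A B (mat_vmeas M D) (\<lambda>t. indicator {A..B} t * fd n t $ k)"
    by (rule vint_cong[OF vmeas_ok_mat[OF assms(2)]]) simp
  also have "\<dots> = M *v vint A B D (\<lambda>t. indicator {A..B} t * fd n t $ k)"
    by (rule vint_mat[OF assms(2) cut_bm[OF a0 aA AB D int4 assms(1)]])
  also have "\<dots> = M *v vint A B D (\<lambda>t. fd n t $ k)"
    by (subst vint_cong[OF assms(2)]) auto
  finally show ?thesis .
qed

lemma theta_combo:
  fixes G0 G1 :: "('m::finite) vmeas"
  assumes "vmeas_ok A B G0" "vmeas_ok A B G1"
  shows "vint A B G0 (\<lambda>t. \<theta> \<bullet> fd 0 t) + vint A B G1 (\<lambda>t. \<theta> \<bullet> fd 1 t)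
       = (\<Sum>k\<in>UNIV. \<theta> $ k *\<^sub>R (vint A B G0 (\<lambda>t. fd 0 t $ k) + vint A B G1 (\<lambda>t. fd 1 t $ k)))"
proof -
  have l0: "vint A B G0 (\<lambda>t. \<theta> \<bullet> fd 0 t) = (\<Sum>k\<in>UNIV. \<theta> $ k *\<^sub>R vint A B G0 (\<lambda>t. fd 0 t $ k))"
    by (rule lincomb[OF a0 aA AB D int4 _ assms(1)]) simp
  have l1: "vint A B G1 (\<lambda>t. \<theta> \<bullet> fd 1 t) = (\<Sum>k\<in>UNIV. \<theta> $ k *\<^sub>R vint A B G1 (\<lambda>t. fd 1 t $ k))"
    by (rule lincomb[OF a0 aA AB D int4 _ assms(2)]) simp
  show ?thesis unfolding l0 l1 by (simp add: sum.distrib scaleR_right_distrib)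
qed

lemma unbiased_H:
  assumes inv: "invertible (CC a A B fd)"
  shows "unbiased A B (fd 0) (fd 1) (mat_vmeas (matrix_inv (CC a A B fd)) (zeta0 a A B fd))
                                   (mat_vmeas (matrix_inv (CC a A B fd)) (zeta1 a A B fd))"
  unfolding unbiased_def
proof
  fix \<theta> :: "real^'m"
  define Ci where "Ci = matrix_inv (CC a A B fd)"
  note okZ0 = okZ0[OF a0 aA AB D int4] and okZ1 = okZ1[OF a0 aA AB D int4]
  have "vint A B (mat_vmeas Ci (zeta0 a A B fd)) (\<lambda>t. \<theta> \<bullet> fd 0 t) + vint A B (mat_vmeas Ci (zeta1 a A B fd)) (\<lambda>t. \<theta> \<bullet> fd 1 t)
     = (\<Sum>k\<in>UNIV. \<theta> $ k *\<^sub>R (Ci *v (CC a A B fd $ k)))"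
  proof -
    have m0: "vint A B (mat_vmeas Ci (zeta0 a A B fd)) (\<lambda>t. fd 0 t $ k) = Ci *v vint A B (zeta0 a A B fd) (\<lambda>t. fd 0 t $ k)" for k
      by (rule vint_mat_f[OF _ okZ0]) simp
    have m1: "vint A B (mat_vmeas Ci (zeta1 a A B fd)) (\<lambda>t. fd 1 t $ k) = Ci *v vint A B (zeta1 a A B fd) (\<lambda>t. fd 1 t $ k)" for k
      by (rule vint_mat_f[OF _ okZ1]) simp
    show ?thesis
      unfolding theta_combo[OF vmeas_ok_mat[OF okZ0] vmeas_ok_mat[OF okZ1]] m0 m1 CC_row[OF a0 aA AB D int4]
      by (simp add: matrix_vector_right_distrib)
  qed
  also have "\<dots> = Ci *v (\<Sum>k\<in>UNIV. \<theta> $ k *\<^sub>R (CC a A B fd $ k))"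
    by (simp add: vec.sum matrix_vector_mult_scaleR)
  also have "(\<Sum>k\<in>UNIV. \<theta> $ k *\<^sub>R (CC a A B fd $ k)) = CC a A B fd *v \<theta>"
    unfolding vec_eq_iff matrix_vector_mult_def
    by (simp add: sum_component CC_sym[OF a0 aA AB D int4] mult.commute)
  also have "Ci *v (CC a A B fd *v \<theta>) = \<theta>"
    unfolding Ci_def matrix_vector_mul_assoc matrix_inv_left[OF inv] by simp
  finally show "vint A B (mat_vmeas (matrix_inv (CC a A B fd)) (zeta0 a A B fd)) (\<lambda>t. \<theta> \<bullet> fd 0 t)
     + vint A B (mat_vmeas (matrix_inv (CC a A B fd)) (zeta1 a A B fd)) (\<lambda>t. \<theta> \<bullet> fd 1 t) = \<theta>"
    unfolding Ci_def .
qed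

end


lemma quad_rep:
  fixes X :: "real^'m::finite^'m" and P Q :: "'m \<Rightarrow> real \<Rightarrow> real"
  assumes X: "\<And>i j. X $ i $ j = set_lebesgue_integral lborel {0..C} (\<lambda>u. P i u * Q j u)"
    and bP: "\<And>i. bm (P i)" and bQ: "\<And>j. bm (Q j)"
  shows "v \<bullet> (X *v v) = set_lebesgue_integral lborel {0..C} (\<lambda>u. (\<Sum>i\<in>UNIV. v $ i * P i u) * (\<Sum>j\<in>UNIV. v $ j * Q j u))"
proof -
  have "v \<bullet> (X *v v) = (\<Sum>i\<in>UNIV. \<Sum>j\<in>UNIV. v $ i * v $ j * set_lebesgue_integral lborel {0..C} (\<lambda>u. P i u * Q j u))"
    by (simp add: inner_vec_def matrix_vector_mult_def X sum_distrib_left mult_ac)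
  also have "\<dots> = (\<Sum>i\<in>UNIV. \<Sum>j\<in>UNIV. set_lebesgue_integral lborel {0..C} (\<lambda>u. v $ i * v $ j * (P i u * Q j u)))"
    by (simp add: lint_cmult)
  also have "\<dots> = (\<Sum>i\<in>UNIV. set_lebesgue_integral lborel {0..C} (\<lambda>u. \<Sum>j\<in>UNIV. v $ i * v $ j * (P i u * Q j u)))"
    by (intro sum.cong refl lint_sum[symmetric] bm_cmult bm_mult bP bQ) auto
  also have "\<dots> = set_lebesgue_integral lborel {0..C} (\<lambda>u. \<Sum>i\<in>UNIV. \<Sum>j\<in>UNIV. v $ i * v $ j * (P i u * Q j u))"
    by (intro lint_sum[symmetric] bm_sum bm_cmult bm_mult bP bQ) auto
  also have "\<dots> = set_lebesgue_integral lborel {0..C} (\<lambda>u. (\<Sum>i\<in>UNIV. v $ i * P i u) * (\<Sum>j\<in>UNIV. v $ j * Q j u))"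
    by (simp add: sum_product mult_ac)
  finally show ?thesis .
qed

context
  fixes a A B :: real and fd :: "nat \<Rightarrow> real \<Rightarrow> real^'m::finite"
  assumes a0: "0 \<le> a" and aA: "a < A" and AB: "A < B"
    and D: "\<forall>k<4. \<forall>t\<in>{A..B}. (fd k has_vector_derivative fd (Suc k) t) (at t within {A..B})"
    and int4: "set_integrable lborel {A..B} (fd 4)"
    and inv: "invertible (CC a A B fd)"
begin

abbreviation "Ci \<equiv> matrix_inv (CC a A B fd)"
abbreviation "H0 \<equiv> mat_vmeas Ci (zeta0 a A B fd)"
abbreviation "H1 \<equiv> mat_vmeas Ci (zeta1 a A B fd)"

lemma okH0: "vmeas_ok A B H0" by (rule vmeas_ok_mat[OF okZ0[OF a0 aA AB D int4]])
lemma okH1: "vmeas_ok A B H1" by (rule vmeas_ok_mat[OF okZ1[OF a0 aA AB D int4]])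

lemma crossH:
  fixes G0 G1 :: "('m::finite) vmeas"
  assumes ok0: "vmeas_ok A B G0" and ok1: "vmeas_ok A B G1" and ub: "unbiased A B (fd 0) (fd 1) G0 G1"
  shows "set_lebesgue_integral lborel {0..B} (\<lambda>u. Psi a A B G0 G1 u $ i * Psi a A B H0 H1 u $ j) = Ci $ j $ i"
proof -
  note okZ0 = okZ0[OF a0 aA AB D int4] and okZ1 = okZ1[OF a0 aA AB D int4]
  define z where "z k u = Psi a A B (zeta0 a A B fd) (zeta1 a A B fd) u $ k" for k u
  define g where "g u = Psi a A B G0 G1 u $ i" for u
  have zb: "bm (z k)" for k unfolding z_def[abs_def] by (rule bm_Psi[OF a0 aA AB okZ0 okZ1])
  have gb: "bm g" unfolding g_def[abs_def] by (rule bm_Psi[OF a0 aA AB ok0 ok1])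
  have PH: "Psi a A B H0 H1 u $ j = (\<Sum>k\<in>UNIV. Ci $ j $ k * z k u)" for u
    unfolding Psi_mat[OF a0 aA AB D int4 okZ0 okZ1] z_def by (simp add: matrix_vector_mult_def)
  have "set_lebesgue_integral lborel {0..B} (\<lambda>u. Psi a A B G0 G1 u $ i * Psi a A B H0 H1 u $ j)
     = set_lebesgue_integral lborel {0..B} (\<lambda>u. \<Sum>k\<in>UNIV. Ci $ j $ k * (g u * z k u))"
    unfolding PH g_def by (simp add: sum_distrib_left mult_ac)
  also have "\<dots> = (\<Sum>k\<in>UNIV. Ci $ j $ k * set_lebesgue_integral lborel {0..B} (\<lambda>u. g u * z k u))"
  proof -
    have bms: "\<And>k. bm (\<lambda>u. Ci $ j $ k * (g u * z k u))" by (intro bm_cmult bm_mult gb zb)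
    show ?thesis by (subst lint_sum[OF _ bms]) (auto simp: lint_cmult)
  qed
  also have "\<dots> = (\<Sum>k\<in>UNIV. Ci $ j $ k * (vint A B G0 (\<lambda>t. fd 0 t $ k) $ i + vint A B G1 (\<lambda>t. fd 1 t $ k) $ i))"
    unfolding g_def z_def cross[OF a0 aA AB D int4 ok0 ok1] ..
  also have "\<dots> = (vint A B G0 (\<lambda>t. Ci $ j \<bullet> fd 0 t) + vint A B G1 (\<lambda>t. Ci $ j \<bullet> fd 1 t)) $ i"
    unfolding theta_combo[OF a0 aA AB D int4 ok0 ok1] by (simp add: sum_component)
  also have "\<dots> = Ci $ j $ i" using ub unfolding unbiased_def by simp
  finally show ?thesis .
qed

lemma unbH: "unbiased A B (fd 0) (fd 1) H0 H1"
  by (rule unbiased_H[OF a0 aA AB D int4 inv])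

lemma est_cov_rep:
  fixes G0 G1 :: "('m::finite) vmeas"
  assumes "vmeas_ok A B G0" "vmeas_ok A B G1"
  shows "est_cov a A B G0 G1 $ i $ j = set_lebesgue_integral lborel {0..B} (\<lambda>u. Psi a A B G0 G1 u $ i * Psi a A B G0 G1 u $ j)"
  unfolding est_cov_def by (rule est_rep[OF a0 aA AB assms assms])

lemma Ci_sym: "Ci $ i $ j = Ci $ j $ i"
proof -
  have "Ci $ j $ i = set_lebesgue_integral lborel {0..B} (\<lambda>u. Psi a A B H0 H1 u $ i * Psi a A B H0 H1 u $ j)"
    by (rule crossH[OF okH0 okH1 unbH, symmetric])
  also have "\<dots> = set_lebesgue_integral lborel {0..B} (\<lambda>u. Psi a A B H0 H1 u $ j * Psi a A B H0 H1 u $ i)"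
    by (simp add: mult.commute)
  also have "\<dots> = Ci $ i $ j" by (rule crossH[OF okH0 okH1 unbH])
  finally show ?thesis ..
qed

lemma estH: "est_cov a A B H0 H1 = Ci"
  unfolding vec_eq_iff
proof (intro allI)
  fix i j
  show "est_cov a A B H0 H1 $ i $ j = Ci $ i $ j"
    unfolding est_cov_rep[OF okH0 okH1] crossH[OF okH0 okH1 unbH] by (rule Ci_sym)
qed

lemma loewner:
  fixes G0 G1 :: "('m::finite) vmeas"
  assumes ok0: "vmeas_ok A B G0" and ok1: "vmeas_ok A B G1" and ub: "unbiased A B (fd 0) (fd 1) G0 G1"
  shows "v \<bullet> (Ci *v v) \<le> v \<bullet> (est_cov a A B G0 G1 *v v)"
proof -
  define P where "P i u = Psi a A B G0 G1 u $ i" for i u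
  define Q where "Q i u = Psi a A B H0 H1 u $ i" for i u
  have bP: "bm (P i)" for i unfolding P_def[abs_def] by (rule bm_Psi[OF a0 aA AB ok0 ok1])
  have bQ: "bm (Q i)" for i unfolding Q_def[abs_def] by (rule bm_Psi[OF a0 aA AB okH0 okH1])
  define wG where "wG u = (\<Sum>i\<in>UNIV. v $ i * P i u)" for u
  define wH where "wH u = (\<Sum>i\<in>UNIV. v $ i * Q i u)" for u
  have bG: "bm wG" unfolding wG_def[abs_def] by (intro bm_sum bm_cmult bP) auto
  have bH: "bm wH" unfolding wH_def[abs_def] by (intro bm_sum bm_cmult bQ) auto
  have GG: "v \<bullet> (est_cov a A B G0 G1 *v v) = set_lebesgue_integral lborel {0..B} (\<lambda>u. wG u * wG u)"
    unfolding wG_def by (rule quad_rep[OF _ bP bP]) (simp add: est_cov_rep[OF ok0 ok1] P_def)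
  have HH: "v \<bullet> (Ci *v v) = set_lebesgue_integral lborel {0..B} (\<lambda>u. wH u * wH u)"
    unfolding wH_def by (rule quad_rep[OF _ bQ bQ]) (simp add: est_cov_rep[OF okH0 okH1, symmetric] estH Q_def)
  have GH: "v \<bullet> (Ci *v v) = set_lebesgue_integral lborel {0..B} (\<lambda>u. wG u * wH u)"
    unfolding wG_def wH_def by (rule quad_rep[OF _ bP bQ]) (simp add: P_def Q_def crossH[OF ok0 ok1 ub] Ci_sym)
  have "0 \<le> set_lebesgue_integral lborel {0..B} (\<lambda>u. (wG u - wH u) * (wG u - wH u))"
    unfolding set_lebesgue_integral_def by (intro Bochner_Integration.integral_nonneg) (auto simp: indicator_def)
  also have "set_lebesgue_integral lborel {0..B} (\<lambda>u. (wG u - wH u) * (wG u - wH u))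
      = set_lebesgue_integral lborel {0..B} (\<lambda>u. wG u * wG u + (- 2) * (wG u * wH u) + wH u * wH u)"
    by (simp add: algebra_simps)
  also have "\<dots> = set_lebesgue_integral lborel {0..B} (\<lambda>u. wG u * wG u) + (- 2) * set_lebesgue_integral lborel {0..B} (\<lambda>u. wG u * wH u)
        + set_lebesgue_integral lborel {0..B} (\<lambda>u. wH u * wH u)"
  proof -
    have b1: "bm (\<lambda>u. wG u * wG u)" "bm (\<lambda>u. (- 2) * (wG u * wH u))" "bm (\<lambda>u. wH u * wH u)"
      by (rule bm_mult[OF bG bG], rule bm_cmult[OF bm_mult[OF bG bH]], rule bm_mult[OF bH bH])
    have "set_lebesgue_integral lborel {0..B} (\<lambda>u. wG u * wG u + (- 2) * (wG u * wH u) + wH u * wH u)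
        = set_lebesgue_integral lborel {0..B} (\<lambda>u. wG u * wG u + (- 2) * (wG u * wH u)) + set_lebesgue_integral lborel {0..B} (\<lambda>u. wH u * wH u)"
      by (rule lint_add[OF bm_add[OF b1(1,2)] b1(3)])
    also have "set_lebesgue_integral lborel {0..B} (\<lambda>u. wG u * wG u + (- 2) * (wG u * wH u))
        = set_lebesgue_integral lborel {0..B} (\<lambda>u. wG u * wG u) + set_lebesgue_integral lborel {0..B} (\<lambda>u. (- 2) * (wG u * wH u))"
      by (rule lint_add[OF b1(1,2)])
    finally show ?thesis by (simp only: lint_cmult)
  qed
  finally show ?thesis unfolding GG[symmetric] HH[symmetric] GH[symmetric] by simp
qed

end


theorem proposition3p1:
  fixes a A B :: real and fd :: "nat \<Rightarrow> real \<Rightarrow> real^'m::finite"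
  assumes "0 \<le> a" and "a < A" and "A < B"
    and "\<forall>k<4. \<forall>t\<in>{A..B}. (fd k has_vector_derivative fd (Suc k) t) (at t within {A..B})"
    and "set_integrable lborel {A..B} (fd 4)"
    and "invertible (vouter A B (fd 0) (zeta0 a A B fd) + vouter A B (fd 1) (zeta1 a A B fd))"
  shows "let C = vouter A B (fd 0) (zeta0 a A B fd) + vouter A B (fd 1) (zeta1 a A B fd);
             G0 = mat_vmeas (matrix_inv C) (zeta0 a A B fd);
             G1 = mat_vmeas (matrix_inv C) (zeta1 a A B fd)
         in is_BLUE a A B (fd 0) (fd 1) G0 G1 \<and> est_cov a A B G0 G1 = matrix_inv C"
proof -
  have CCeq: "vouter A B (fd 0) (zeta0 a A B fd) + vouter A B (fd 1) (zeta1 a A B fd) = CC a A B fd"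
    by (rule CC_def[OF assms(1-5), symmetric])
  have inv: "invertible (CC a A B fd)" using assms(6) CCeq by simp
  note ctx = assms(1-5) inv
  show ?thesis
    unfolding Let_def CCeq is_BLUE_def loewner_le_def
    using okH0[OF ctx] okH1[OF ctx] unbH[OF ctx] estH[OF ctx] loewner[OF ctx] by auto
qed

end
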